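(* For every $n\ge r\ge1$ there is a sequence $V_0,V_1,\dots,V_N$ of pointed vector configurations in $\mathbf{R}^{r\times n}$ in general position such that (1) $V_{t-1}$ and $V_t$ differ by a single mutation for each $1\le t\le N$, and (2) for every $1\le j\le\lfloor\frac{r-1}{2}\rfloor$ and $0\le k\le\lfloor\frac{n-r-1}{2}\rfloor$, some mutation $V_{t-1}\to V_t$ is of type $(j,k)$.
   Context: $[n]=\{1,\dots,n\}$. $V=[v_1|\cdots|v_n]\in\mathbf{R}^{r\times n}$ is in general position if any $r$ columns are linearly independent, and pointed if all columns lie in an open linear halfspace $\{x:\langle u,x\rangle>0\}$ for some $u\ne0$. For $F\in\{-1,0,+1\}^n$, $F_+,F_0,F_-$ are the sets of $i$ with $F_i=+1,0,-1$; $\mathcal{F}(V)$ is the set of sign vectors $(\operatorname{sgn}\langle v_1,u\rangle,\dots,\operatorname{sgn}\langle v_n,u\rangle)$, $u\ne0$. Two configurations $V,W$ in general position differ by a mutation if there is a continuous path $V(t)$, $t\in[0,1]$, $V(0)=V$, $V(1)=W$, and $t_0\in(0,1)$ such that $V(t)$ is in general position for $t\ne t_0$, at $t_0$ exactly one $r$-element set $R\subseteq[n]$ of columns is linearly dependent, all $(r-1)$-element sets of columns of $V(t_0)$ are linearly independent, and the sign of $\det[v_i(t)]_{i\in R}$ for $t<t_0$ is opposite to that for $t>t_0$. There is then $Y\in\{-1,+1\}^n$ such that the elements of $\{-1,+1\}^n$ in $\mathcal{F}(W)\setminus\mathcal{F}(V)$ are exactly $Y$ and $-Y$; with $a=|R\cap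 Y_-|$ and $b=|Y_-\setminus R|$, the mutation is of type $(a,b)\equiv(r-a,n-r-b)$, i.e., it is said to be of type $(a,b)$ and also of type $(r-a,n-r-b)$. *)

theory Defs
  imports Complex_Main "Jordan_Normal_Form.Determinant"
begin

text \<open>A vector configuration V in R^(r x n) is represented as
  V :: nat => nat => real, where V i k is the k-th coordinate (k in {1..r})
  of the i-th column v_i (i in {1..n}). Values outside these ranges are ignored.\<close>

type_synonym config = "nat \<Rightarrow> nat \<Rightarrow> real"

definition ip :: "nat \<Rightarrow> (nat \<Rightarrow> real) \<Rightarrow> (nat \<Rightarrow> real) \<Rightarrow> real" where
  "ip r x u = (\<Sum>k=1..r. x k * u k)"

definition nonzero_vec :: "nat \<Rightarrow> (nat \<Rightarrow> real) \<Rightarrow> bool" where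
  "nonzero_vec r u \<longleftrightarrow> (\<exists>k\<in>{1..r}. u k \<noteq> 0)"

definition lin_indep_cols :: "nat \<Rightarrow> config \<Rightarrow> nat set \<Rightarrow> bool" where
  "lin_indep_cols r V S \<longleftrightarrow>
     (\<forall>c :: nat \<Rightarrow> real. (\<forall>k\<in>{1..r}. (\<Sum>i\<in>S. c i * V i k) = 0) \<longrightarrow> (\<forall>i\<in>S. c i = 0))"

definition general_position :: "nat \<Rightarrow> nat \<Rightarrow> config \<Rightarrow> bool" where
  "general_position r n V \<longleftrightarrow>
     (\<forall>S. S \<subseteq> {1..n} \<and> card S = r \<longrightarrow> lin_indep_cols r V S)"

definition pointed :: "nat \<Rightarrow> nat \<Rightarrow> config \<Rightarrow> bool" where
  "pointed r n V \<longleftrightarrow> (\<exists>u. nonzero_vec r u \<and> (\<forall>i\<in>{1..n}. ip r (V i) u > 0))"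

definition signvecs :: "nat \<Rightarrow> nat \<Rightarrow> config \<Rightarrow> (nat \<Rightarrow> real) set" where
  "signvecs r n V = {(\<lambda>i. if i \<in> {1..n} then sgn (ip r (V i) u) else 0) | u. nonzero_vec r u}"

definition pm_vecs :: "nat \<Rightarrow> (nat \<Rightarrow> real) set" where
  "pm_vecs n = {Y. (\<forall>i\<in>{1..n}. Y i = 1 \<or> Y i = -1) \<and> (\<forall>i. i \<notin> {1..n} \<longrightarrow> Y i = 0)}"

definition det_cols :: "nat \<Rightarrow> config \<Rightarrow> nat set \<Rightarrow> real" where
  "det_cols r V R = det (mat r r (\<lambda>(k, j). V (sorted_list_of_set R ! j) (k + 1)))"

definition mutation_path :: "nat \<Rightarrow> nat \<Rightarrow> config \<Rightarrow> config \<Rightarrow> (real \<Rightarrow> config) \<Rightarrow> real \<Rightarrow> nat set \<Rightarrow> bool" where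
  "mutation_path r n V W P t0 R \<longleftrightarrow>
     (\<forall>i\<in>{1..n}. \<forall>k\<in>{1..r}. P 0 i k = V i k \<and> P 1 i k = W i k) \<and>
     (\<forall>i\<in>{1..n}. \<forall>k\<in>{1..r}. continuous_on {0..1} (\<lambda>t. P t i k)) \<and>
     t0 \<in> {0<..<1} \<and>
     (\<forall>t\<in>{0..1}. t \<noteq> t0 \<longrightarrow> general_position r n (P t)) \<and>
     R \<subseteq> {1..n} \<and> card R = r \<and> \<not> lin_indep_cols r (P t0) R \<and>
     (\<forall>S. S \<subseteq> {1..n} \<and> card S = r \<and> \<not> lin_indep_cols r (P t0) S \<longrightarrow> S = R) \<and>
     (\<forall>S. S \<subseteq> {1..n} \<and> card S = r - 1 \<longrightarrow> lin_indep_cols r (P t0) S) \<and>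
     (\<forall>s\<in>{0..<t0}. \<forall>s'\<in>{t0<..1}.
        sgn (det_cols r (P s) R) = - sgn (det_cols r (P s') R))"

definition differ_by_mutation :: "nat \<Rightarrow> nat \<Rightarrow> config \<Rightarrow> config \<Rightarrow> bool" where
  "differ_by_mutation r n V W \<longleftrightarrow> (\<exists>P t0 R. mutation_path r n V W P t0 R)"

definition mutation_of_type :: "nat \<Rightarrow> nat \<Rightarrow> config \<Rightarrow> config \<Rightarrow> nat \<Rightarrow> nat \<Rightarrow> bool" where
  "mutation_of_type r n V W a b \<longleftrightarrow>
     (\<exists>P t0 R Y. mutation_path r n V W P t0 R \<and> Y \<in> pm_vecs n \<and>
        (signvecs r n W - signvecs r n V) \<inter> pm_vecs n = {Y, (\<lambda>i. - Y i)} \<and>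
        (let Ym = {i\<in>{1..n}. Y i = -1} in
           (a = card (R \<inter> Ym) \<and> b = card (Ym - R)) \<or>
           (int a = int r - int (card (R \<inter> Ym)) \<and>
            int b = int n - int r - int (card (Ym - R)))))"

end

theory Submission
  imports Defs "HOL-Analysis.Function_Topology"
begin


definition dep :: "nat \<Rightarrow> config \<Rightarrow> nat set \<Rightarrow> (nat \<Rightarrow> real) \<Rightarrow> bool" where
  "dep r V T mu \<longleftrightarrow> (\<forall>k\<in>{1..r}. (\<Sum>i\<in>T. mu i * V i k) = 0)"

lemma sum_sorted_idx:
  assumes "finite S"
  shows "(\<Sum>i\<in>S. f i) = (\<Sum>j<card S. f (sorted_list_of_set S ! j))"
proof -
  let ?l = "sorted_list_of_set S"
  have "(\<Sum>i\<in>S. f i) = sum_list (map f ?l)"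
    using assms by (simp add: sum_list_distinct_conv_sum_set)
  also have "\<dots> = (\<Sum>j<length ?l. f (?l ! j))"
    by (simp add: sum_list_sum_nth atLeast0LessThan)
  finally show ?thesis using assms by simp
qed

lemma lin_indep_cols_cong:
  assumes "\<And>i k. i \<in> S \<Longrightarrow> k \<in> {1..r} \<Longrightarrow> V i k = W i k"
  shows "lin_indep_cols r V S = lin_indep_cols r W S"
proof -
  have "\<And>c k. k \<in> {1..r} \<Longrightarrow> (\<Sum>i\<in>S. c i * V i k) = (\<Sum>i\<in>S. c i * W i k)"
    using assms by (intro sum.cong) auto
  then show ?thesis unfolding lin_indep_cols_def by auto
qed

lemma lin_indep_subset:
  assumes "lin_indep_cols r V S" "T \<subseteq> S" "finite S"
  shows "lin_indep_cols r V T"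
  unfolding lin_indep_cols_def
proof (intro allI impI ballI)
  fix c i assume h: "\<forall>k\<in>{1..r}. (\<Sum>i\<in>T. c i * V i k) = 0" and i: "i \<in> T"
  define c' where "c' = (\<lambda>i. if i \<in> T then c i else 0)"
  have "\<forall>k\<in>{1..r}. (\<Sum>i\<in>S. c' i * V i k) = 0"
  proof
    fix k assume k: "k \<in> {1..r}"
    have "(\<Sum>i\<in>S. c' i * V i k) = (\<Sum>i\<in>T. c' i * V i k)"
      using assms(2,3) by (intro sum.mono_neutral_right) (auto simp: c'_def)
    also have "\<dots> = (\<Sum>i\<in>T. c i * V i k)" by (simp add: c'_def)
    finally show "(\<Sum>i\<in>S. c' i * V i k) = 0" using h k by simp
  qed
  then have "c' i = 0" using assms(1,2) i unfolding lin_indep_cols_def by blast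
  then show "c i = 0" using i by (simp add: c'_def)
qed

definition colmat :: "nat \<Rightarrow> config \<Rightarrow> nat set \<Rightarrow> real mat" where
  "colmat r V S = mat r r (\<lambda>(k, j). V (sorted_list_of_set S ! j) (k + 1))"

lemma det_cols_colmat: "det_cols r V S = det (colmat r V S)"
  by (simp add: det_cols_def colmat_def)

lemma colmat_carrier: "colmat r V S \<in> carrier_mat r r"
  by (simp add: colmat_def)

definition idx :: "nat set \<Rightarrow> nat \<Rightarrow> nat" where
  "idx S i = the_inv_into {..<card S} ((!) (sorted_list_of_set S)) i"

lemma idx_bij: "finite S \<Longrightarrow> bij_betw ((!) (sorted_list_of_set S)) {..<card S} S"
  by (rule bij_betw_nth) auto

lemma idx_nth: "finite S \<Longrightarrow> j < card S \<Longrightarrow> idx S (sorted_list_of_set S ! j) = j"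
  unfolding idx_def
  by (rule the_inv_into_f_f) (use idx_bij[of S] in \<open>auto simp: bij_betw_def\<close>)

lemma nth_idx: "finite S \<Longrightarrow> i \<in> S \<Longrightarrow> sorted_list_of_set S ! idx S i = i \<and> idx S i < card S"
proof -
  assume f: "finite S" and i: "i \<in> S"
  have b: "bij_betw ((!) (sorted_list_of_set S)) {..<card S} S" using idx_bij[OF f] .
  have "sorted_list_of_set S ! idx S i = i"
    unfolding idx_def by (rule f_the_inv_into_f_bij_betw[OF b]) (use i in auto)
  moreover have "idx S i \<in> {..<card S}"
    unfolding idx_def using bij_betw_the_inv_into[OF b] i by (meson bij_betwE)
  ultimately show ?thesis by simp
qed

lemma colmat_mult:
  assumes "finite S" "card S = r" "k < r" "v \<in> carrier_vec r"
  shows "(colmat r V S *\<^sub>v v) $ k = (\<Sum>i\<in>S. v $ (idx S i) * V i (k+1))"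
proof -
  let ?l = "sorted_list_of_set S"
  have d: "distinct ?l" and len: "length ?l = r" using assms by auto
  have "(colmat r V S *\<^sub>v v) $ k = (\<Sum>j<r. V (?l ! j) (k+1) * v $ j)"
    using assms by (simp add: colmat_def scalar_prod_def atLeast0LessThan)
  also have "\<dots> = (\<Sum>j<r. v $ (idx S (?l ! j)) * V (?l ! j) (k+1))"
    using d len assms by (intro sum.cong) (auto simp: idx_nth)
  also have "\<dots> = (\<Sum>i\<in>S. v $ (idx S i) * V i (k+1))"
    using sum_sorted_idx[OF assms(1), of "\<lambda>i. v $ (idx S i) * V i (k+1)"] assms by simp
  finally show ?thesis .
qed

lemma lin_indep_iff_det:
  assumes f: "finite S" and c: "card S = r"
  shows "lin_indep_cols r V S \<longleftrightarrow> det_cols r V S \<noteq> 0"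
proof
  assume li: "lin_indep_cols r V S"
  show "det_cols r V S \<noteq> 0"
  proof
    assume "det_cols r V S = 0"
    then obtain v where v: "v \<in> carrier_vec r" "v \<noteq> 0\<^sub>v r" "colmat r V S *\<^sub>v v = 0\<^sub>v r"
      using det_0_iff_vec_prod_zero[OF colmat_carrier] by (auto simp: det_cols_colmat)
    define cc where "cc = (\<lambda>i. v $ idx S i)"
    have "\<forall>k\<in>{1..r}. (\<Sum>i\<in>S. cc i * V i k) = 0"
    proof
      fix k assume k: "k \<in> {1..r}"
      obtain k' where k': "k = Suc k'" "k' < r" using k by (cases k) auto
      have "(colmat r V S *\<^sub>v v) $ k' = (\<Sum>i\<in>S. cc i * V i k)"
        using colmat_mult[OF f c k'(2) v(1), of V] k' by (simp add: cc_def)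
      then show "(\<Sum>i\<in>S. cc i * V i k) = 0" using v(3) k' by simp
    qed
    then have z: "\<forall>i\<in>S. cc i = 0" using li unfolding lin_indep_cols_def by blast
    have "v = 0\<^sub>v r"
    proof (rule eq_vecI)
      fix j assume j: "j < dim_vec (0\<^sub>v r)"
      then have jr: "j < card S" using c by simp
      have "sorted_list_of_set S ! j \<in> S"
        using jr f by (metis nth_mem length_sorted_list_of_set set_sorted_list_of_set)
      then have "cc (sorted_list_of_set S ! j) = 0" using z by blast
      then show "v $ j = 0\<^sub>v r $ j" using idx_nth[OF f jr] j by (simp add: cc_def)
    qed (use v(1) in simp)
    then show False using v(2) by simp
  qed
next
  assume d: "det_cols r V S \<noteq> 0"
  show "lin_indep_cols r V S"
    unfolding lin_indep_cols_def
  proof (intro allI impI ballI)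
    fix cc i assume h: "\<forall>k\<in>{1..r}. (\<Sum>i\<in>S. cc i * V i k) = 0" and i: "i \<in> S"
    define v where "v = vec r (\<lambda>j. cc (sorted_list_of_set S ! j))"
    have vc: "v \<in> carrier_vec r" by (simp add: v_def)
    have vi: "\<And>i. i \<in> S \<Longrightarrow> v $ idx S i = cc i"
      using nth_idx[OF f] c by (simp add: v_def)
    have "colmat r V S *\<^sub>v v = 0\<^sub>v r"
    proof (rule eq_vecI)
      fix k assume "k < dim_vec (0\<^sub>v r)"
      then have k: "k < r" by simp
      have "(colmat r V S *\<^sub>v v) $ k = (\<Sum>i\<in>S. cc i * V i (k+1))"
        using colmat_mult[OF f c k vc] vi by (auto intro: sum.cong)
      also have "\<dots> = 0" using h k by simp
      finally show "(colmat r V S *\<^sub>v v) $ k = 0\<^sub>v r $ k" using k by simp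
    qed (simp add: colmat_def)
    then have "v = 0\<^sub>v r"
      using d det_0_iff_vec_prod_zero[OF colmat_carrier, of r V S] vc
      by (auto simp: det_cols_colmat)
    then show "cc i = 0" using vi[OF i] nth_idx[OF f i] c by simp
  qed
qed

lemma solve_cols:
  assumes f: "finite S" and c: "card S = r" and li: "lin_indep_cols r V S"
  shows "\<exists>mu. \<forall>k\<in>{1..r}. (\<Sum>i\<in>S. mu i * V i k) = y k"
proof -
  let ?A = "colmat r V S"
  have "det ?A \<noteq> 0" using li lin_indep_iff_det[OF f c] by (simp add: det_cols_colmat)
  from det_non_zero_imp_unit[OF colmat_carrier this, of "()"]
  obtain B where B: "B \<in> carrier_mat r r" "?A * B = 1\<^sub>m r"
    unfolding Units_def ring_mat_def by auto
  define yv where "yv = vec r (\<lambda>k. y (k+1))"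
  define v where "v = B *\<^sub>v yv"
  have vc: "v \<in> carrier_vec r" using B by (simp add: v_def yv_def)
  have "?A *\<^sub>v v = yv"
    unfolding v_def using B
    by (metis assoc_mult_mat_vec colmat_carrier one_mult_mat_vec vec_carrier yv_def)
  show ?thesis
  proof (intro exI ballI)
    fix k assume k: "k \<in> {1..r}"
    obtain k' where k': "k = Suc k'" "k' < r" using k by (cases k) auto
    have "(?A *\<^sub>v v) $ k' = (\<Sum>i\<in>S. v $ idx S i * V i k)"
      using colmat_mult[OF f c k'(2) vc, of V] k' by simp
    then show "(\<Sum>i\<in>S. v $ idx S i * V i k) = y k"
      using \<open>?A *\<^sub>v v = yv\<close> k' by (simp add: yv_def)
  qed
qed

lemma sorted_insert_last:
  assumes f: "finite S0" and lt: "\<forall>i\<in>S0. i < n"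
  shows "sorted_list_of_set (insert n S0) = sorted_list_of_set S0 @ [n]"
proof -
  have "sorted_wrt (<) (sorted_list_of_set S0 @ [n])"
    using f lt by (simp add: sorted_wrt_append)
  moreover have "set (sorted_list_of_set S0 @ [n]) = insert n S0" using f by auto
  moreover have "length (sorted_list_of_set S0 @ [n]) = card (insert n S0)"
    using f lt by (auto simp: card_insert_if)
  ultimately show ?thesis using sorted_list_of_set_unique[of "insert n S0"] f by blast
qed

lemma colmat_last:
  assumes f: "finite S0" "card S0 + 1 = r" "\<forall>i\<in>S0. i < n" and k: "kk < r"
  shows "colmat r V (insert n S0) $$ (kk, r - 1) = V n (kk + 1)"
    and "\<And>j. j < r - 1 \<Longrightarrow> colmat r V (insert n S0) $$ (kk, j) = V (sorted_list_of_set S0 ! j) (kk+1)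
            \<and> sorted_list_of_set S0 ! j \<in> S0"
proof -
  have sl: "sorted_list_of_set (insert n S0) = sorted_list_of_set S0 @ [n]"
    using sorted_insert_last f by blast
  have len: "length (sorted_list_of_set S0) = r - 1" using f by simp
  show "colmat r V (insert n S0) $$ (kk, r - 1) = V n (kk + 1)"
    using k len by (simp add: colmat_def sl nth_append)
  fix j assume j: "j < r - 1"
  show "colmat r V (insert n S0) $$ (kk, j) = V (sorted_list_of_set S0 ! j) (kk+1)
            \<and> sorted_list_of_set S0 ! j \<in> S0"
  proof -
    have "sorted_list_of_set S0 ! j \<in> set (sorted_list_of_set S0)" by (rule nth_mem) (use len j in simp)
    then show ?thesis using k j len f by (simp add: colmat_def sl nth_append)
  qed
qed

lemma det_lastcol:
  assumes f: "finite S0" "card S0 + 1 = r" "\<forall>i\<in>S0. i < n"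
  shows "det_cols r V (insert n S0) = ip r (V n) (\<lambda>k. cofactor (colmat r V (insert n S0)) (k - 1) (r - 1))"
proof -
  have r: "r - 1 < r" using f by simp
  have "det_cols r V (insert n S0) = (\<Sum>kk<r. colmat r V (insert n S0) $$ (kk, r - 1) * cofactor (colmat r V (insert n S0)) kk (r - 1))"
    unfolding det_cols_colmat by (rule laplace_expansion_column[OF colmat_carrier r])
  also have "\<dots> = (\<Sum>kk<r. V n (Suc kk) * cofactor (colmat r V (insert n S0)) (Suc kk - 1) (r - 1))"
    using colmat_last(1)[OF f] by (intro sum.cong) auto
  also have "\<dots> = ip r (V n) (\<lambda>k. cofactor (colmat r V (insert n S0)) (k - 1) (r - 1))"
    unfolding ip_def by (rule sum_bounds_lt_plus1)
  finally show ?thesis .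
qed

lemma cof_indep:
  assumes f: "finite S0" "card S0 + 1 = r" "\<forall>i\<in>S0. i < n"
    and same: "\<forall>i\<in>S0. \<forall>k\<in>{1..r}. V i k = W i k"
  shows "cofactor (colmat r V (insert n S0)) kk (r - 1) = cofactor (colmat r W (insert n S0)) kk (r - 1)"
proof -
  have "mat_delete (colmat r V (insert n S0)) kk (r - 1) = mat_delete (colmat r W (insert n S0)) kk (r - 1)"
  proof (rule eq_matI)
    fix i j assume i: "i < dim_row (mat_delete (colmat r W (insert n S0)) kk (r - 1))"
      and j: "j < dim_col (mat_delete (colmat r W (insert n S0)) kk (r - 1))"
    have ir: "i < r - 1" and jr: "j < r - 1" using i j by (auto simp: colmat_def)
    define i' where "i' = (if i < kk then i else Suc i)"
    have i'r: "i' < r" using ir by (auto simp: i'_def)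
    have "mat_delete (colmat r V (insert n S0)) kk (r - 1) $$ (i, j) = colmat r V (insert n S0) $$ (i', j)"
      using ir jr by (simp add: mat_delete_def colmat_def i'_def)
    also have "\<dots> = V (sorted_list_of_set S0 ! j) (i'+1)" using colmat_last(2)[OF f i'r jr] by simp
    also have "\<dots> = W (sorted_list_of_set S0 ! j) (i'+1)"
      using colmat_last(2)[OF f i'r jr, of V] same i'r by auto
    also have "\<dots> = colmat r W (insert n S0) $$ (i', j)" using colmat_last(2)[OF f i'r jr] by simp
    also have "\<dots> = mat_delete (colmat r W (insert n S0)) kk (r - 1) $$ (i, j)"
      using ir jr by (simp add: mat_delete_def colmat_def i'_def)
    finally show "mat_delete (colmat r V (insert n S0)) kk (r - 1) $$ (i, j) =
          mat_delete (colmat r W (insert n S0)) kk (r - 1) $$ (i, j)" .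
  qed (auto simp: colmat_def)
  then show ?thesis by (simp add: cofactor_def)
qed



definition mom :: config where "mom i k = (real i) ^ (k - 1)"
definition cfg :: "nat \<Rightarrow> (nat \<Rightarrow> real) \<Rightarrow> config" where
  "cfg n x = (\<lambda>i. if i = n then x else mom i)"
definition qp :: "nat set \<Rightarrow> real poly" where "qp S = (\<Prod>i\<in>S. [:- real i, 1:])"
definition coefv :: "real poly \<Rightarrow> nat \<Rightarrow> real" where "coefv p = (\<lambda>k. coeff p (k - 1))"
definition Q :: "nat \<Rightarrow> nat set \<Rightarrow> (nat \<Rightarrow> real) \<Rightarrow> real" where
  "Q r S y = ip r y (coefv (qp S))"

lemma ip_poly:
  assumes "degree p < r"
  shows "ip r (\<lambda>k. t ^ (k - 1)) (coefv p) = poly p t"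
proof -
  have "ip r (\<lambda>k. t ^ (k - 1)) (coefv p) = (\<Sum>k<r. t ^ k * coeff p k)"
    unfolding ip_def coefv_def by (subst sum_bounds_lt_plus1[symmetric]) simp
  also have "\<dots> = (\<Sum>k\<le>degree p. t ^ k * coeff p k)"
    using assms by (intro sum.mono_neutral_right) (auto simp: coeff_eq_0)
  also have "\<dots> = poly p t" by (simp add: poly_altdef mult.commute)
  finally show ?thesis .
qed

lemma degree_qp: "finite S \<Longrightarrow> degree (qp S) = card S"
  unfolding qp_def by (subst degree_prod_sum_eq) auto

lemma poly_qp: "poly (qp S) t = (\<Prod>i\<in>S. t - real i)"
  unfolding qp_def by (simp add: poly_prod)

lemma ip_mom: "degree p < r \<Longrightarrow> ip r (mom i) (coefv p) = poly p (real i)"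
  using ip_poly[of p r "real i"] by (simp add: mom_def[abs_def])

lemma Q_mom: "finite S \<Longrightarrow> card S < r \<Longrightarrow> Q r S (mom i) = (\<Prod>s\<in>S. real i - real s)"
  unfolding Q_def by (simp add: ip_mom degree_qp poly_qp)

lemma Q_mom_zero: "finite S \<Longrightarrow> card S < r \<Longrightarrow> i \<in> S \<Longrightarrow> Q r S (mom i) = 0"
  by (simp add: Q_mom)

lemma Q_mom_nz: "finite S \<Longrightarrow> card S < r \<Longrightarrow> i \<notin> S \<Longrightarrow> Q r S (mom i) \<noteq> 0"
  by (auto simp: Q_mom)

lemma ip_lin_sum:
  "ip r (\<lambda>k. (\<Sum>i\<in>T. c i * V i k)) u = (\<Sum>i\<in>T. c i * ip r (V i) u)"
  unfolding ip_def by (simp add: sum_distrib_left sum_distrib_right mult.assoc sum.swap[of _ T])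

lemma ip_cong: "(\<And>k. k \<in> {1..r} \<Longrightarrow> x k = y k) \<Longrightarrow> ip r x u = ip r y u"
  unfolding ip_def by (intro sum.cong) auto

lemma ip_add: "ip r (\<lambda>k. a * x k + b * y k) u = a * ip r x u + b * ip r y u"
  unfolding ip_def by (simp add: sum.distrib sum_distrib_left algebra_simps)

lemma Q_add: "Q r S (\<lambda>k. a * x k + b * y k) = a * Q r S x + b * Q r S y"
  unfolding Q_def by (rule ip_add)

lemma mom_indep:
  assumes f: "finite S" and c: "card S = r"
  shows "lin_indep_cols r mom S"
  unfolding lin_indep_cols_def
proof (intro allI impI ballI)
  fix cc i0 assume h: "\<forall>k\<in>{1..r}. (\<Sum>i\<in>S. cc i * mom i k) = 0" and i0: "i0 \<in> S"
  define p where "p = qp (S - {i0})"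
  have r0: "r > 0" using f c i0 card_gt_0_iff by blast
  have dp: "degree p < r" using f c i0 r0 by (simp add: p_def degree_qp card_Diff_singleton)
  have "0 = ip r (\<lambda>k. (\<Sum>i\<in>S. cc i * mom i k)) (coefv p)"
    using h unfolding ip_def by simp
  also have "\<dots> = (\<Sum>i\<in>S. cc i * poly p (real i))"
    by (simp add: ip_lin_sum ip_mom[OF dp])
  also have "\<dots> = cc i0 * poly p (real i0)"
    using f i0 by (simp add: sum.remove[OF f i0] p_def poly_qp)
      (intro sum.neutral ballI, auto simp: prod_zero_iff)
  finally have "cc i0 * poly p (real i0) = 0" by simp
  moreover have "poly p (real i0) \<noteq> 0" using f by (auto simp: p_def poly_qp)
  ultimately show "cc i0 = 0" by simp
qed

lemma cfg_fixed_indep: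
  assumes "finite S" "card S = r" "n \<notin> S"
  shows "lin_indep_cols r (cfg n x) S"
proof -
  have "lin_indep_cols r (cfg n x) S = lin_indep_cols r mom S"
    using assms(3) by (intro lin_indep_cols_cong) (auto simp: cfg_def)
  then show ?thesis using mom_indep[OF assms(1,2)] by simp
qed

lemma dep_Q_zero:
  assumes f: "finite S'" and c: "card S' + 1 = r" and nS: "n \<notin> S'"
    and nli: "\<not> lin_indep_cols r (cfg n x) (insert n S')"
  shows "Q r S' x = 0"
proof -
  obtain cc i where h: "\<forall>k\<in>{1..r}. (\<Sum>i\<in>insert n S'. cc i * cfg n x i k) = 0"
    and i: "i \<in> insert n S'" and ci: "cc i \<noteq> 0"
    using nli unfolding lin_indep_cols_def by blast
  have hs: "\<And>k. k \<in> {1..r} \<Longrightarrow> cc n * x k + (\<Sum>i\<in>S'. cc i * mom i k) = 0"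
  proof -
    fix k assume k: "k \<in> {1..r}"
    have e0: "(\<Sum>i\<in>S'. cc i * cfg n x i k) = (\<Sum>i\<in>S'. cc i * mom i k)"
      using nS by (intro sum.cong) (auto simp: cfg_def)
    have e1: "(\<Sum>i\<in>insert n S'. cc i * cfg n x i k) = cc n * cfg n x n k + (\<Sum>i\<in>S'. cc i * cfg n x i k)"
      by (rule sum.insert[OF f nS])
    have "cfg n x n k = x k" by (simp add: cfg_def)
    then show "cc n * x k + (\<Sum>i\<in>S'. cc i * mom i k) = 0"
      using h k e0 e1 by simp
  qed
  have cn: "cc n \<noteq> 0"
  proof
    assume cn0: "cc n = 0"
    have li: "lin_indep_cols r mom S'"
      using lin_indep_subset[OF mom_indep[of "insert n S'" r]] f c nS by auto
    then have "\<forall>i\<in>S'. cc i = 0" using hs cn0 unfolding lin_indep_cols_def by simp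
    then show False using i ci cn0 by auto
  qed
  have xk: "\<And>k. k \<in> {1..r} \<Longrightarrow> x k = (\<Sum>i\<in>S'. (- cc i / cc n) * mom i k)"
  proof -
    fix k assume k: "k \<in> {1..r}"
    have "x k = - (\<Sum>i\<in>S'. cc i * mom i k) / cc n" using hs[OF k] cn by (simp add: field_simps)
    also have "\<dots> = (\<Sum>i\<in>S'. (- cc i / cc n) * mom i k)"
      by (simp add: sum_divide_distrib sum_negf[symmetric])
    finally show "x k = (\<Sum>i\<in>S'. (- cc i / cc n) * mom i k)" .
  qed
  have "Q r S' x = ip r (\<lambda>k. \<Sum>i\<in>S'. (- cc i / cc n) * mom i k) (coefv (qp S'))"
    unfolding Q_def by (rule ip_cong) (use xk in auto)
  also have "\<dots> = (\<Sum>i\<in>S'. (- cc i / cc n) * Q r S' (mom i))"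
    using ip_lin_sum[where c="\<lambda>i. - cc i / cc n" and T=S' and V=mom and u="coefv (qp S')" and r=r] by (simp add: Q_def)
  also have "\<dots> = 0" using f c by (intro sum.neutral) (auto simp: Q_mom_zero)
  finally show ?thesis .
qed

lemma Q_zero_dep:
  assumes f: "finite S'" and c: "card S' + 1 = r" and nS: "n \<notin> S'"
    and q: "Q r S' x = 0"
  shows "\<not> lin_indep_cols r (cfg n x) (insert n S')"
proof -
  define m where "m = Suc (Max (insert n S'))"
  have mS: "m \<notin> insert n S'"
    using f Max_ge[of "insert n S'"] unfolding m_def by (metis Suc_n_not_le_n finite_insert)
  have fT: "finite (insert m S')" and cT: "card (insert m S') = r" using f c mS by auto
  obtain mu where mu: "\<forall>k\<in>{1..r}. (\<Sum>i\<in>insert m S'. mu i * mom i k) = x k"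
    using solve_cols[OF fT cT mom_indep[OF fT cT], of x] by blast
  have "Q r S' x = ip r (\<lambda>k. \<Sum>i\<in>insert m S'. mu i * mom i k) (coefv (qp S'))"
    unfolding Q_def by (rule ip_cong) (use mu in auto)
  also have "\<dots> = (\<Sum>i\<in>insert m S'. mu i * Q r S' (mom i))"
    by (simp add: ip_lin_sum Q_def)
  also have "\<dots> = mu m * Q r S' (mom m)"
    using f c mS by (simp add: Q_mom_zero)
  finally have "mu m * Q r S' (mom m) = 0" using q by simp
  moreover have "Q r S' (mom m) \<noteq> 0" using Q_mom_nz f c mS by simp
  ultimately have mu0: "mu m = 0" by simp
  define cc where "cc = (\<lambda>i. if i = n then -1 else mu i)"
  have "\<forall>k\<in>{1..r}. (\<Sum>i\<in>insert n S'. cc i * cfg n x i k) = 0"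
  proof
    fix k assume k: "k \<in> {1..r}"
    have "(\<Sum>i\<in>insert n S'. cc i * cfg n x i k) = - x k + (\<Sum>i\<in>S'. mu i * mom i k)"
      using f nS by (simp add: cc_def cfg_def) (intro sum.cong, auto)
    also have "(\<Sum>i\<in>S'. mu i * mom i k) = x k"
      using mu k f mS mu0 by simp
    finally show "(\<Sum>i\<in>insert n S'. cc i * cfg n x i k) = 0" by simp
  qed
  then show ?thesis unfolding lin_indep_cols_def by (auto simp: cc_def intro!: exI[of _ cc])
qed

lemma indep_iff_Q:
  assumes f: "finite S'" and c: "card S' + 1 = r" and nS: "n \<notin> S'"
  shows "lin_indep_cols r (cfg n x) (insert n S') \<longleftrightarrow> Q r S' x \<noteq> 0"
  using dep_Q_zero[OF assms] Q_zero_dep[OF assms] by blast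

definition Sfam :: "nat \<Rightarrow> nat \<Rightarrow> nat set set" where
  "Sfam r n = {S. S \<subseteq> {1..n-1} \<and> card S + 1 = r}"

lemma Sfam_finite: "finite (Sfam r n)"
  unfolding Sfam_def by (rule finite_subset[of _ "Pow {1..n-1}"]) auto

definition generic :: "nat \<Rightarrow> nat \<Rightarrow> (nat \<Rightarrow> real) \<Rightarrow> bool" where
  "generic r n x \<longleftrightarrow> (\<forall>S\<in>Sfam r n. Q r S x \<noteq> 0)"

lemma gp_cfg:
  assumes r: "r \<ge> 1" and g: "generic r n x"
  shows "general_position r n (cfg n x)"
  unfolding general_position_def
proof (intro allI impI)
  fix S assume S: "S \<subseteq> {1..n} \<and> card S = r"
  have fS: "finite S" using S finite_subset by blast
  show "lin_indep_cols r (cfg n x) S"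
  proof (cases "n \<in> S")
    case True
    define S' where "S' = S - {n}"
    have S'f: "finite S'" using fS by (simp add: S'_def)
    have cS': "card S' + 1 = r" using S True fS r by (simp add: S'_def card_Diff_singleton)
    have nS': "n \<notin> S'" by (simp add: S'_def)
    have "S' \<subseteq> {1..n-1}" using S by (auto simp: S'_def)
    then have "S' \<in> Sfam r n" using cS' by (simp add: Sfam_def)
    then have "Q r S' x \<noteq> 0" using g by (simp add: generic_def)
    then have "lin_indep_cols r (cfg n x) (insert n S')" using indep_iff_Q[OF S'f cS' nS'] by simp
    moreover have "insert n S' = S" using True by (auto simp: S'_def)
    ultimately show ?thesis by simp
  next
    case False
    then show ?thesis using cfg_fixed_indep fS S by blast
  qed
qed

lemma det_lin:
  assumes f: "finite S'" and c: "card S' + 1 = r" and lt: "\<forall>i\<in>S'. i < n"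
  shows "\<exists>h. \<forall>x. det_cols r (cfg n x) (insert n S') = ip r x h"
proof -
  define h where "h = (\<lambda>k. cofactor (colmat r (cfg n (\<lambda>_. 0)) (insert n S')) (k - 1) (r - 1))"
  have "det_cols r (cfg n x) (insert n S') = ip r x h" for x
  proof -
    have "det_cols r (cfg n x) (insert n S') = ip r (cfg n x n) (\<lambda>k. cofactor (colmat r (cfg n x) (insert n S')) (k - 1) (r - 1))"
      by (rule det_lastcol[OF f c lt])
    also have "\<dots> = ip r x h"
    proof -
      have same: "\<forall>i\<in>S'. \<forall>k\<in>{1..r}. cfg n x i k = cfg n (\<lambda>_. 0) i k"
        using lt by (auto simp: cfg_def)
      have "cfg n x n = x" by (simp add: cfg_def)
      then show ?thesis
        unfolding h_def using cof_indep[OF f c lt same] by simp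
    qed
    finally show ?thesis .
  qed
  then show ?thesis by blast
qed



lemma gordan:
  fixes w :: "nat \<Rightarrow> nat \<Rightarrow> real"
  assumes fI: "finite I" and nI: "I \<noteq> {}" and no: "\<not> (\<exists>u. \<forall>i\<in>I. ip r (w i) u > 0)"
  shows "\<exists>lam. (\<forall>i\<in>I. lam i \<ge> 0) \<and> (\<forall>k\<in>{1..r}. (\<Sum>i\<in>I. lam i * w i k) = 0) \<and> (\<exists>i\<in>I. lam i > 0)"
proof -
  define Bx where "Bx = (\<lambda>i::nat. if i \<in> I then {0..1::real} else {0})"
  define D where "D = Pi UNIV Bx \<inter> {lam. (\<Sum>i\<in>I. lam i) = 1}"
  have cB: "compact (Pi UNIV Bx)"
  proof -
    have "compactin (product_topology (\<lambda>_. euclidean) UNIV) (PiE UNIV Bx)"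
      by (subst compactin_PiE) (auto simp: Bx_def compactin_euclidean_iff)
    then show ?thesis
      by (simp add: euclidean_product_topology compactin_euclidean_iff PiE_UNIV_domain)
  qed
  have contc: "continuous_on UNIV (\<lambda>x::nat\<Rightarrow>real. x i)" for i by simp
  have cS: "closed {lam::nat\<Rightarrow>real. (\<Sum>i\<in>I. lam i) = 1}"
    by (rule closed_Collect_eq) (auto intro!: continuous_on_sum contc)
  have cD: "compact D" unfolding D_def using cB cS by (rule compact_Int_closed)
  obtain i0 where i0: "i0 \<in> I" using nI by blast
  have "(\<lambda>i. if i = i0 then 1 else 0) \<in> D"
    using i0 fI by (auto simp: D_def Bx_def)
  then have nD: "D \<noteq> {}" by blast
  define g where "g = (\<lambda>lam::nat\<Rightarrow>real. (\<Sum>k\<in>{1..r}. (\<Sum>i\<in>I. lam i * w i k)\<^sup>2))"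
  have cg: "continuous_on D g"
    unfolding g_def by (intro continuous_intros continuous_on_subset[OF contc]) auto
  obtain lam where lamD: "lam \<in> D" and lmin: "\<And>y. y \<in> D \<Longrightarrow> g lam \<le> g y"
    using continuous_attains_inf[OF cD nD cg] by blast
  have lB: "\<And>i. lam i \<in> Bx i" using lamD by (simp add: D_def Pi_iff)
  have lam01: "0 \<le> lam i \<and> lam i \<le> 1" if "i \<in> I" for i
    using lB[of i] that by (simp add: Bx_def)
  have lam0: "lam i = 0" if "i \<notin> I" for i
    using lB[of i] that by (simp add: Bx_def)
  have lsum: "(\<Sum>i\<in>I. lam i) = 1" using lamD by (simp add: D_def)
  define p where "p = (\<lambda>k. \<Sum>i\<in>I. lam i * w i k)"
  have g0: "g lam \<ge> 0" unfolding g_def by (simp add: sum_nonneg)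
  have glam: "g lam = (\<Sum>k\<in>{1..r}. (p k)\<^sup>2)" unfolding g_def p_def by simp
  have lpos: "\<exists>i\<in>I. lam i > 0"
  proof (rule ccontr)
    assume "\<not> ?thesis"
    then have "\<forall>i\<in>I. lam i = 0" using lam01 by force
    then show False using lsum by simp
  qed
  show ?thesis
  proof (cases "g lam = 0")
    case True
    have "\<forall>k\<in>{1..r}. (p k)\<^sup>2 = 0"
      using True unfolding g_def p_def by (subst (asm) sum_nonneg_eq_0_iff) auto
    then show ?thesis using lam01 lpos unfolding p_def by auto
  next
    case False
    then have gpos: "g lam > 0" using g0 by simp
    have "\<forall>j\<in>I. ip r (w j) p > 0"
    proof
      fix j assume j: "j \<in> I"
      define A where "A = (\<Sum>k\<in>{1..r}. p k * (w j k - p k))"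
      define B where "B = (\<Sum>k\<in>{1..r}. (w j k - p k)\<^sup>2)"
      have B0: "B \<ge> 0" unfolding B_def by (simp add: sum_nonneg)
      have key: "0 \<le> 2 * A + t * B" if t: "0 < t" "t \<le> 1" for t
      proof -
        define lt where "lt = (\<lambda>i. (1 - t) * lam i + t * (if i = j then 1 else 0))"
        have ltD: "lt \<in> D"
        proof -
          have "\<forall>i. lt i \<in> Bx i"
          proof
            fix i show "lt i \<in> Bx i"
            proof (cases "i \<in> I")
              case True
              have "0 \<le> (1 - t) * lam i" using lam01[OF True] t by simp
              moreover have "(1 - t) * lam i \<le> (1 - t)" using lam01[OF True] t
                by (simp add: mult_left_le)
              ultimately show ?thesis using True t by (auto simp: lt_def Bx_def)
            next
              case False
              then show ?thesis using lam0[OF False] j by (auto simp: lt_def Bx_def)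
            qed
          qed
          moreover have "(\<Sum>i\<in>I. lt i) = 1"
            using fI j lsum by (simp add: lt_def sum.distrib sum_distrib_left[symmetric])
          ultimately show ?thesis by (auto simp: D_def)
        qed
        have "\<And>k. (\<Sum>i\<in>I. lt i * w i k) = p k + t * (w j k - p k)"
        proof -
          fix k
          have "(\<Sum>i\<in>I. lt i * w i k) = (\<Sum>i\<in>I. (1 - t) * (lam i * w i k) + (if i = j then t * w j k else 0))"
            by (intro sum.cong) (auto simp: lt_def algebra_simps)
          also have "\<dots> = (1 - t) * p k + t * w j k"
            using fI j by (simp add: sum.distrib sum_distrib_left[symmetric] p_def)
          finally show "(\<Sum>i\<in>I. lt i * w i k) = p k + t * (w j k - p k)" by (simp add: algebra_simps)
        qed
        then have "g lt = (\<Sum>k\<in>{1..r}. (p k + t * (w j k - p k))\<^sup>2)" by (simp add: g_def)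
        also have "\<dots> = (\<Sum>k\<in>{1..r}. (p k)\<^sup>2 + 2 * t * (p k * (w j k - p k)) + t\<^sup>2 * (w j k - p k)\<^sup>2)"
          by (intro sum.cong) (auto simp: power2_eq_square algebra_simps)
        also have "\<dots> = g lam + 2 * t * A + t\<^sup>2 * B"
          by (simp add: glam A_def B_def sum.distrib sum_distrib_left)
        finally have "g lam \<le> g lam + 2 * t * A + t\<^sup>2 * B" using lmin[OF ltD] by simp
        then have "0 \<le> t * (2 * A + t * B)" by (simp add: power2_eq_square algebra_simps)
        then show ?thesis using t by (simp add: zero_le_mult_iff)
      qed
      have A0: "A \<ge> 0"
      proof (rule ccontr)
        assume "\<not> A \<ge> 0"
        then have An: "A < 0" by simp
        show False
        proof (cases "B = 0")
          case True then show False using key[of 1] An by simp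
        next
          case False
          then have Bp: "B > 0" using B0 by simp
          define t where "t = min 1 ((- A) / B)"
          have "(- A) / B > 0" using An Bp by (intro divide_pos_pos) auto
          then have t0: "0 < t" "t \<le> 1" by (auto simp: t_def)
          have "t \<le> (- A) / B" by (simp add: t_def)
          then have "t * B \<le> ((- A) / B) * B" using Bp by (intro mult_right_mono) auto
          then have "t * B \<le> - A" using Bp by simp
          then show False using key[OF t0] An by simp
        qed
      qed
      have "A + (\<Sum>k\<in>{1..r}. (p k)\<^sup>2) = (\<Sum>k\<in>{1..r}. w j k * p k)"
        unfolding A_def by (simp add: power2_eq_square sum.distrib[symmetric] algebra_simps)
      then have "ip r (w j) p = A + g lam" by (simp add: ip_def glam)
      then show "ip r (w j) p > 0" using A0 gpos by simp
    qed
    then show ?thesis using no by blast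
  qed
qed



lemma ip_zero_vec: "(\<And>k. k \<in> {1..r} \<Longrightarrow> x k = 0) \<Longrightarrow> ip r x u = 0"
  unfolding ip_def by simp

lemma no_tope_of_dep:
  assumes X: "X \<in> signvecs r n V" and T: "T \<subseteq> {1..n}" "T \<noteq> {}"
    and d: "dep r V T mu" and sg: "\<forall>i\<in>T. sgn (mu i) = X i" and nz: "\<forall>i\<in>T. X i \<noteq> 0"
  shows False
proof -
  obtain u where u: "X = (\<lambda>i. if i \<in> {1..n} then sgn (ip r (V i) u) else 0)"
    using X unfolding signvecs_def by blast
  have fT: "finite T" using T finite_subset by blast
  have pos: "\<forall>i\<in>T. mu i * ip r (V i) u > 0"
  proof
    fix i assume i: "i \<in> T"
    have "sgn (mu i) = sgn (ip r (V i) u)" using sg i T u by auto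
    moreover have "sgn (mu i) \<noteq> 0" using sg nz i by auto
    ultimately have "sgn (mu i * ip r (V i) u) = 1"
      by (simp add: sgn_mult) (metis sgn_if)
    then show "mu i * ip r (V i) u > 0" by (simp add: sgn_1_pos)
  qed
  have "(\<Sum>i\<in>T. mu i * ip r (V i) u) > 0"
    using pos fT T(2) by (intro sum_pos) auto
  moreover have "(\<Sum>i\<in>T. mu i * ip r (V i) u) = ip r (\<lambda>k. \<Sum>i\<in>T. mu i * V i k) u"
    by (simp add: ip_lin_sum)
  moreover have "ip r (\<lambda>k. \<Sum>i\<in>T. mu i * V i k) u = 0"
    using d unfolding dep_def by (intro ip_zero_vec) auto
  ultimately show False by simp
qed

lemma signvecs_neg:
  assumes "X \<in> signvecs r n V" shows "(\<lambda>i. - X i) \<in> signvecs r n V"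
proof -
  obtain u where u: "nonzero_vec r u" "X = (\<lambda>i. if i \<in> {1..n} then sgn (ip r (V i) u) else 0)"
    using assms unfolding signvecs_def by blast
  have "ip r (V i) (\<lambda>k. - u k) = - ip r (V i) u" for i by (simp add: ip_def sum_negf)
  moreover have "nonzero_vec r (\<lambda>k. - u k)" using u(1) by (auto simp: nonzero_vec_def)
  ultimately show ?thesis using u(2) unfolding signvecs_def
    by (intro CollectI exI[of _ "\<lambda>k. - u k"]) (auto simp: sgn_minus)
qed

lemma pm_neg: "Y \<in> pm_vecs n \<Longrightarrow> (\<lambda>i. - Y i) \<in> pm_vecs n"
  unfolding pm_vecs_def by auto

lemma dep_unique:
  assumes gp: "general_position r n V" and T: "T \<subseteq> {1..n}" "card T = r + 1"
    and dm: "dep r V T mu" and dk: "dep r V T ka" and mnz: "\<forall>i\<in>T. mu i \<noteq> 0"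
  shows "\<exists>c. \<forall>i\<in>T. ka i = c * mu i"
proof -
  have fT: "finite T" using T finite_subset by blast
  obtain i0 where i0: "i0 \<in> T" using T by fastforce
  define rho where "rho = (\<lambda>i. ka i0 * mu i - mu i0 * ka i)"
  have "\<forall>k\<in>{1..r}. (\<Sum>i\<in>T - {i0}. rho i * V i k) = 0"
  proof
    fix k assume k: "k \<in> {1..r}"
    have "(\<Sum>i\<in>T. rho i * V i k) = ka i0 * (\<Sum>i\<in>T. mu i * V i k) - mu i0 * (\<Sum>i\<in>T. ka i * V i k)"
      by (simp add: rho_def algebra_simps sum_subtractf sum_distrib_left)
    also have "\<dots> = 0" using dm dk k by (simp add: dep_def)
    finally have "(\<Sum>i\<in>T. rho i * V i k) = 0" .
    moreover have "(\<Sum>i\<in>T. rho i * V i k) = rho i0 * V i0 k + (\<Sum>i\<in>T - {i0}. rho i * V i k)"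
      using sum.remove[OF fT i0] by simp
    moreover have "rho i0 = 0" by (simp add: rho_def)
    ultimately show "(\<Sum>i\<in>T - {i0}. rho i * V i k) = 0" by simp
  qed
  moreover have "lin_indep_cols r V (T - {i0})"
  proof -
    have "T - {i0} \<subseteq> {1..n}" "card (T - {i0}) = r" using T i0 fT by (auto simp: card_Diff_singleton)
    then show ?thesis using gp unfolding general_position_def by blast
  qed
  ultimately have z: "\<forall>i\<in>T - {i0}. rho i = 0" unfolding lin_indep_cols_def by blast
  have "\<forall>i\<in>T. ka i = (ka i0 / mu i0) * mu i"
  proof
    fix i assume i: "i \<in> T"
    show "ka i = (ka i0 / mu i0) * mu i"
    proof (cases "i = i0")
      case True then show ?thesis using mnz i0 by simp
    next
      case False
      then have "ka i0 * mu i = mu i0 * ka i" using z i by (auto simp: rho_def)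
      then show ?thesis using mnz i0 by (simp add: field_simps)
    qed
  qed
  then show ?thesis by blast
qed

lemma gordan_circ:
  assumes gp: "general_position r n V" and r1: "r \<ge> 1" and nr: "n \<ge> r"
    and X: "X \<in> pm_vecs n" and nX: "X \<notin> signvecs r n V"
  shows "\<exists>T mu. T \<subseteq> {1..n} \<and> card T = r + 1 \<and> dep r V T mu \<and> (\<forall>i\<in>T. sgn (mu i) = X i)"
proof -
  let ?N = "{1..n}"
  have Xpm: "X i = 1 \<or> X i = -1" if "i \<in> ?N" for i using X that by (simp add: pm_vecs_def)
  have X0: "X i = 0" if "i \<notin> ?N" for i using X that by (simp add: pm_vecs_def)
  have XX: "X i * X i = 1" if "i \<in> ?N" for i using Xpm[OF that] by auto
  define w where "w = (\<lambda>i k. X i * V i k)"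
  have no: "\<not> (\<exists>u. \<forall>i\<in>?N. ip r (w i) u > 0)"
  proof
    assume "\<exists>u. \<forall>i\<in>?N. ip r (w i) u > 0"
    then obtain u where u: "\<forall>i\<in>?N. ip r (w i) u > 0" by blast
    have ipw: "ip r (w i) u = X i * ip r (V i) u" for i
      by (simp add: ip_def w_def sum_distrib_left mult.assoc)
    have sg: "sgn (ip r (V i) u) = X i" if i: "i \<in> ?N" for i
    proof -
      have "X i * ip r (V i) u > 0" using u i ipw by simp
      then show ?thesis using Xpm[OF i] by (auto simp: sgn_if zero_less_mult_iff)
    qed
    have nzu: "nonzero_vec r u"
    proof (rule ccontr)
      assume "\<not> nonzero_vec r u"
      then have "\<forall>k\<in>{1..r}. u k = 0" by (simp add: nonzero_vec_def)
      then have "ip r (w 1) u = 0" by (simp add: ip_def)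
      moreover have "1 \<in> ?N" using r1 nr by simp
      ultimately show False using u by fastforce
    qed
    have "X = (\<lambda>i. if i \<in> ?N then sgn (ip r (V i) u) else 0)"
      by (rule ext) (use sg X0 in auto)
    then have "X \<in> signvecs r n V" using nzu unfolding signvecs_def by blast
    with nX show False by simp
  qed
  have nN: "?N \<noteq> {}" using r1 nr by simp
  obtain lam0 where l0: "\<forall>i\<in>?N. lam0 i \<ge> 0" "\<forall>k\<in>{1..r}. (\<Sum>i\<in>?N. lam0 i * w i k) = 0"
    "\<exists>i\<in>?N. lam0 i > 0"
    using gordan[OF finite_atLeastAtMost nN no] by blast
  define P where "P m \<longleftrightarrow> (\<exists>lam. (\<forall>i\<in>?N. lam i \<ge> 0) \<and> (\<forall>k\<in>{1..r}. (\<Sum>i\<in>?N. lam i * w i k) = 0)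
      \<and> {i\<in>?N. lam i > 0} \<noteq> {} \<and> card {i\<in>?N. lam i > 0} = m)" for m
  have "P (card {i\<in>?N. lam0 i > 0})" unfolding P_def using l0 by blast
  then have ex: "\<exists>m. P m" by blast
  define m0 where "m0 = (LEAST m. P m)"
  have Pm0: "P m0" unfolding m0_def using ex by (rule LeastI_ex)
  have mmin: "\<And>m. P m \<Longrightarrow> m0 \<le> m" unfolding m0_def by (rule Least_le)
  obtain lam where lnn: "\<forall>i\<in>?N. lam i \<ge> 0" and ldep: "\<forall>k\<in>{1..r}. (\<Sum>i\<in>?N. lam i * w i k) = 0"
    and lne: "{i\<in>?N. lam i > 0} \<noteq> {}" and lcard: "card {i\<in>?N. lam i > 0} = m0"
    using Pm0 unfolding P_def by blast
  define T where "T = {i\<in>?N. lam i > 0}"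
  have fT: "finite T" and TN: "T \<subseteq> ?N" by (auto simp: T_def)
  have Tne: "T \<noteq> {}" using lne by (simp add: T_def)
  have lamz: "lam i = 0" if "i \<in> ?N" "i \<notin> T" for i using lnn that by (force simp: T_def)
  have sumT: "(\<Sum>i\<in>?N. lam i * w i k) = (\<Sum>i\<in>T. lam i * w i k)" for k
    using TN lamz by (intro sum.mono_neutral_right) auto
  have cT: "card T = r + 1"
  proof (rule ccontr)
    assume ne: "card T \<noteq> r + 1"
    show False
    proof (cases "card T \<le> r")
      case True
      obtain U where U: "T \<subseteq> U" "U \<subseteq> ?N" "card U = r"
        using exists_subset_between[OF True _ TN] nr by auto
      have liU: "lin_indep_cols r V U" using gp U unfolding general_position_def by blast
      define c where "c = (\<lambda>i. if i \<in> T then lam i * X i else 0)"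
      have fU: "finite U" using U(2) finite_subset by blast
      have "\<forall>k\<in>{1..r}. (\<Sum>i\<in>U. c i * V i k) = 0"
      proof
        fix k assume k: "k \<in> {1..r}"
        have "(\<Sum>i\<in>U. c i * V i k) = (\<Sum>i\<in>T. c i * V i k)"
          using U(1) fU by (intro sum.mono_neutral_right) (auto simp: c_def)
        also have "\<dots> = (\<Sum>i\<in>T. lam i * w i k)"
          by (intro sum.cong) (auto simp: c_def w_def)
        also have "\<dots> = 0" using ldep k sumT by simp
        finally show "(\<Sum>i\<in>U. c i * V i k) = 0" .
      qed
      then have cz: "\<forall>i\<in>U. c i = 0" using liU unfolding lin_indep_cols_def by blast
      obtain i where i: "i \<in> T" using Tne by blast
      have "c i = 0" using cz i U(1) by blast
      then have "lam i * X i = 0" using i by (simp add: c_def)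
      moreover have "lam i > 0" using i by (simp add: T_def)
      moreover have iN: "i \<in> ?N" using i TN by blast
      then have "X i \<noteq> 0" using Xpm[OF iN] by auto
      ultimately show False by simp
    next
      case False
      then have big: "card T \<ge> r + 2" using ne by simp
      have "r + 1 \<le> card T" using big by simp
      from obtain_subset_with_card_n[OF this]
      obtain T' where T': "T' \<subseteq> T" "card T' = r + 1" "finite T'" by blast
      obtain t where t: "t \<in> T'" using T'(2) by fastforce
      define U where "U = T' - {t}"
      have fU: "finite U" and cU: "card U = r" and UN: "U \<subseteq> ?N" and tU: "t \<notin> U"
        using T' t TN by (auto simp: U_def card_Diff_singleton)
      have liU: "lin_indep_cols r V U" using gp UN cU unfolding general_position_def by blast
      obtain be where be: "\<forall>k\<in>{1..r}. (\<Sum>i\<in>U. be i * V i k) = V t k"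
        using solve_cols[OF fU cU liU, of "V t"] by blast
      define kv where "kv = (\<lambda>i. if i = t then -1 else if i \<in> U then be i else 0)"
      have T'eq: "T' = insert t U" using t by (auto simp: U_def)
      have kvdep: "(\<Sum>i\<in>T'. kv i * V i k) = 0" if k: "k \<in> {1..r}" for k
      proof -
        have "(\<Sum>i\<in>T'. kv i * V i k) = kv t * V t k + (\<Sum>i\<in>U. kv i * V i k)"
          unfolding T'eq using fU tU by simp
        also have "(\<Sum>i\<in>U. kv i * V i k) = (\<Sum>i\<in>U. be i * V i k)"
          using tU by (intro sum.cong) (auto simp: kv_def)
        finally show ?thesis using be k by (simp add: kv_def)
      qed
      define ka where "ka = (\<lambda>i. kv i * X i)"
      have kadep: "(\<Sum>i\<in>T'. ka i * w i k) = 0" if k: "k \<in> {1..r}" for k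
      proof -
        have "(\<Sum>i\<in>T'. ka i * w i k) = (\<Sum>i\<in>T'. kv i * V i k)"
        proof (intro sum.cong refl)
          fix i assume "i \<in> T'"
          then have "X i * X i = 1" using XX T' TN by auto
          then have "kv i * X i * (X i * V i k) = kv i * (X i * X i) * V i k" by (simp add: algebra_simps)
          then show "ka i * w i k = kv i * V i k" using \<open>X i * X i = 1\<close> by (simp add: ka_def w_def)
        qed
        then show ?thesis using kvdep[OF k] by simp
      qed
      have tN: "t \<in> ?N" using t T' TN by blast
      have kat: "ka t \<noteq> 0" using Xpm[OF tN] by (auto simp: ka_def kv_def)
      define kb where "kb = (if (\<exists>i\<in>T'. ka i > 0) then ka else (\<lambda>i. - ka i))"
      have kbpos: "\<exists>i\<in>T'. kb i > 0"
      proof (cases "\<exists>i\<in>T'. ka i > 0")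
        case True then show ?thesis by (simp add: kb_def)
      next
        case False
        then have "ka t < 0" using kat t by force
        then show ?thesis using False t by (auto simp: kb_def)
      qed
      have kbdep: "(\<Sum>i\<in>T'. kb i * w i k) = 0" if k: "k \<in> {1..r}" for k
        using kadep[OF k] by (auto simp: kb_def sum_negf)
      define Pos where "Pos = {i\<in>T'. kb i > 0}"
      have fPos: "finite Pos" and nPos: "Pos \<noteq> {}" using T'(3) kbpos by (auto simp: Pos_def)
      define th where "th = Min ((\<lambda>i. lam i / kb i) ` Pos)"
      have "th \<in> (\<lambda>i. lam i / kb i) ` Pos" unfolding th_def using fPos nPos by (intro Min_in) auto
      then obtain ist where ist: "ist \<in> Pos" "th = lam ist / kb ist" by blast
      have thle: "th \<le> lam i / kb i" if "i \<in> Pos" for i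
        using fPos that by (simp add: th_def)
      have th0: "th \<ge> 0" using ist lnn T' TN by (auto simp: Pos_def)
      define lam' where "lam' = (\<lambda>i. lam i - th * (if i \<in> T' then kb i else 0))"
      have l'nn: "\<forall>i\<in>?N. lam' i \<ge> 0"
      proof
        fix i assume i: "i \<in> ?N"
        show "lam' i \<ge> 0"
        proof (cases "i \<in> T' \<and> kb i > 0")
          case True
          then have "th \<le> lam i / kb i" using thle by (simp add: Pos_def)
          then have "th * kb i \<le> lam i" using True by (simp add: pos_le_divide_eq)
          then show ?thesis using True by (simp add: lam'_def)
        next
          case False
          then have a: "th * (if i \<in> T' then kb i else 0) \<le> 0"
            using th0 by (auto simp: mult_nonneg_nonpos)
          have b: "lam' i = lam i - th * (if i \<in> T' then kb i else 0)" by (simp add: lam'_def)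
          have "lam i \<ge> 0" using lnn i by blast
          then show ?thesis using a b by linarith
        qed
      qed
      have T'N: "T' \<subseteq> ?N" using T' TN by auto
      have l'dep: "\<forall>k\<in>{1..r}. (\<Sum>i\<in>?N. lam' i * w i k) = 0"
      proof
        fix k assume k: "k \<in> {1..r}"
        have "(\<Sum>i\<in>?N. lam' i * w i k) = (\<Sum>i\<in>?N. lam i * w i k) - th * (\<Sum>i\<in>?N. (if i \<in> T' then kb i else 0) * w i k)"
          by (simp add: lam'_def algebra_simps sum_subtractf sum_distrib_left)
        also have "(\<Sum>i\<in>?N. (if i \<in> T' then kb i else 0) * w i k) = (\<Sum>i\<in>T'. (if i \<in> T' then kb i else 0) * w i k)"
          using T'N by (intro sum.mono_neutral_right) auto
        also have "\<dots> = (\<Sum>i\<in>T'. kb i * w i k)" by simp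
        finally show "(\<Sum>i\<in>?N. lam' i * w i k) = 0" using ldep k kbdep[OF k] by simp
      qed
      have supp': "{i\<in>?N. lam' i > 0} \<subseteq> T - {ist}"
      proof
        fix i assume i: "i \<in> {i\<in>?N. lam' i > 0}"
        have "i \<in> T"
        proof (rule ccontr)
          assume "i \<notin> T"
          then have "i \<notin> T'" "lam i = 0" using T' lamz i by auto
          then show False using i by (simp add: lam'_def)
        qed
        moreover have "i \<noteq> ist"
        proof
          assume "i = ist"
          then have "lam' i = 0" using ist by (simp add: lam'_def Pos_def)
          then show False using i by simp
        qed
        ultimately show "i \<in> T - {ist}" by simp
      qed
      have "\<exists>i. i \<in> T - T'"
      proof (rule ccontr)
        assume "\<not> ?thesis"
        then have "T \<subseteq> T'" by blast
        then have "card T \<le> card T'" using T'(3) by (simp add: card_mono)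
        then show False using big T'(2) by simp
      qed
      then obtain i1 where i1: "i1 \<in> T" "i1 \<notin> T'" by blast
      have "lam' i1 > 0" using i1 by (simp add: lam'_def T_def)
      then have ne': "{i\<in>?N. lam' i > 0} \<noteq> {}" using i1 TN by blast
      have "P (card {i\<in>?N. lam' i > 0})" unfolding P_def using l'nn l'dep ne' by blast
      then have "m0 \<le> card {i\<in>?N. lam' i > 0}" by (rule mmin)
      moreover have "card {i\<in>?N. lam' i > 0} \<le> card (T - {ist})"
        using supp' fT by (intro card_mono) auto
      moreover have "card (T - {ist}) < m0"
      proof -
        have istT: "ist \<in> T" using ist T'(1) by (auto simp: Pos_def)
        have "card (T - {ist}) < card T" by (rule card_Diff1_less[OF fT istT])
        then show ?thesis using lcard by (simp add: T_def)
      qed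
      ultimately show False by simp
    qed
  qed
  define mu where "mu = (\<lambda>i. lam i * X i)"
  have "dep r V T mu"
    unfolding dep_def
  proof
    fix k assume k: "k \<in> {1..r}"
    have "(\<Sum>i\<in>T. mu i * V i k) = (\<Sum>i\<in>T. lam i * w i k)"
      by (simp add: mu_def w_def mult.assoc)
    then show "(\<Sum>i\<in>T. mu i * V i k) = 0" using ldep k sumT by simp
  qed
  moreover have "\<forall>i\<in>T. sgn (mu i) = X i"
  proof
    fix i assume i: "i \<in> T"
    then have "lam i > 0" by (simp add: T_def)
    moreover have iN: "i \<in> ?N" using i TN by blast
    ultimately show "sgn (mu i) = X i" using Xpm[OF iN] by (auto simp: mu_def sgn_mult)
  qed
  ultimately show ?thesis using TN cT by blast
qed



definition seg :: "(nat \<Rightarrow> real) \<Rightarrow> (nat \<Rightarrow> real) \<Rightarrow> real \<Rightarrow> nat \<Rightarrow> real" where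
  "seg x0 x1 s = (\<lambda>k. (1 - s) * x0 k + s * x1 k)"

lemma Q_seg: "Q r S (seg x0 x1 s) = (1 - s) * Q r S x0 + s * Q r S x1"
  unfolding seg_def by (rule Q_add)

lemma Q_rep:
  assumes f: "finite T'" and rep: "\<forall>k\<in>{1..r}. x k = (\<Sum>l\<in>T'. b l * mom l k)"
  shows "Q r S x = (\<Sum>l\<in>T'. b l * Q r S (mom l))"
proof -
  have "Q r S x = ip r (\<lambda>k. \<Sum>l\<in>T'. b l * mom l k) (coefv (qp S))"
    unfolding Q_def by (rule ip_cong) (use rep in auto)
  also have "\<dots> = (\<Sum>l\<in>T'. b l * Q r S (mom l))" by (simp add: ip_lin_sum Q_def)
  finally show ?thesis .
qed

lemma Q_rep_single:
  assumes f: "finite T'" and c: "card T' = r" and i: "i \<in> T'"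
    and rep: "\<forall>k\<in>{1..r}. x k = (\<Sum>l\<in>T'. b l * mom l k)"
  shows "Q r (T' - {i}) x = b i * Q r (T' - {i}) (mom i)"
proof -
  have "card T' > 0" using f i card_gt_0_iff by blast
  then have cs: "card (T' - {i}) < r" using c i f by (simp add: card_Diff_singleton)
  have fi: "finite (T' - {i})" using f by simp
  have "Q r (T' - {i}) x = (\<Sum>l\<in>T'. b l * Q r (T' - {i}) (mom l))" by (rule Q_rep[OF f rep])
  also have "\<dots> = b i * Q r (T' - {i}) (mom i) + (\<Sum>l\<in>T' - {i}. b l * Q r (T' - {i}) (mom l))"
    by (rule sum.remove[OF f i])
  also have "(\<Sum>l\<in>T' - {i}. b l * Q r (T' - {i}) (mom l)) = 0"
    by (rule sum.neutral) (use Q_mom_zero[OF fi cs] in simp)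
  finally show ?thesis by simp
qed

lemma seg_rep:
  assumes r0: "\<forall>k\<in>{1..r}. x0 k = (\<Sum>l\<in>T'. a l * mom l k)"
    and r1: "\<forall>k\<in>{1..r}. x1 k = (\<Sum>l\<in>T'. b l * mom l k)"
  shows "\<forall>k\<in>{1..r}. seg x0 x1 s k = (\<Sum>l\<in>T'. ((1 - s) * a l + s * b l) * mom l k)"
proof
  fix k assume k: "k \<in> {1..r}"
  have "seg x0 x1 s k = (1 - s) * (\<Sum>l\<in>T'. a l * mom l k) + s * (\<Sum>l\<in>T'. b l * mom l k)"
    using r0 r1 k by (simp add: seg_def)
  also have "\<dots> = (\<Sum>l\<in>T'. (1 - s) * (a l * mom l k) + s * (b l * mom l k))"
    by (simp add: sum_distrib_left sum.distrib)
  also have "\<dots> = (\<Sum>l\<in>T'. ((1 - s) * a l + s * b l) * mom l k)"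
    by (intro sum.cong) (auto simp: distrib_right)
  finally show "seg x0 x1 s k = (\<Sum>l\<in>T'. ((1 - s) * a l + s * b l) * mom l k)" .
qed

lemma sign_preserved:
  assumes f: "finite T'" and c: "card T' = r" and i: "i \<in> T'"
    and r0: "\<forall>k\<in>{1..r}. x0 k = (\<Sum>l\<in>T'. a l * mom l k)"
    and r1: "\<forall>k\<in>{1..r}. x1 k = (\<Sum>l\<in>T'. b l * mom l k)"
    and ai: "a i \<noteq> 0"
    and hyp: "\<forall>s\<in>{0..1}. Q r (T' - {i}) (seg x0 x1 s) \<noteq> 0"
  shows "sgn (b i) = sgn (a i)"
proof (rule ccontr)
  assume ne: "sgn (b i) \<noteq> sgn (a i)"
  then have ab: "a i - b i \<noteq> 0" by auto
  define s where "s = a i / (a i - b i)"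
  have s01: "s \<in> {0..1}"
  proof (cases "a i > 0")
    case True
    then have "b i \<le> 0" using ne by (cases "b i > 0") (auto simp: sgn_if)
    then have "a i \<le> a i - b i" "a i - b i > 0" using True by auto
    then show ?thesis using True unfolding s_def by (auto simp: divide_simps)
  next
    case False
    then have an: "a i < 0" using ai by simp
    then have "b i \<ge> 0" using ne by (cases "b i < 0") (auto simp: sgn_if)
    then have "a i - b i \<le> a i" "a i - b i < 0" using an by auto
    then show ?thesis using an unfolding s_def by (auto simp: divide_simps)
  qed
  have coef0: "(1 - s) * a i + s * b i = 0"
    using ab unfolding s_def by (simp add: field_simps)
  have "Q r (T' - {i}) (seg x0 x1 s) = ((1 - s) * a i + s * b i) * Q r (T' - {i}) (mom i)"
    by (rule Q_rep_single[OF f c i seg_rep[OF r0 r1]])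
  then have "Q r (T' - {i}) (seg x0 x1 s) = 0" using coef0 by simp
  then show False using hyp s01 by blast
qed

lemma sign_flipped:
  assumes f: "finite T'" and c: "card T' = r" and i: "i \<in> T'"
    and r0: "\<forall>k\<in>{1..r}. x0 k = (\<Sum>l\<in>T'. a l * mom l k)"
    and r1: "\<forall>k\<in>{1..r}. x1 k = (\<Sum>l\<in>T'. b l * mom l k)"
    and fl: "sgn (Q r (T' - {i}) x0) = - sgn (Q r (T' - {i}) x1)" and nz: "Q r (T' - {i}) x0 \<noteq> 0"
  shows "sgn (b i) = - sgn (a i)"
proof -
  have "card T' > 0" using f i card_gt_0_iff by blast
  then have cs: "card (T' - {i}) < r" using c i f by (simp add: card_Diff_singleton)
  have q0: "Q r (T' - {i}) x0 = a i * Q r (T' - {i}) (mom i)" by (rule Q_rep_single[OF f c i r0])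
  have q1: "Q r (T' - {i}) x1 = b i * Q r (T' - {i}) (mom i)" by (rule Q_rep_single[OF f c i r1])
  have qm: "Q r (T' - {i}) (mom i) \<noteq> 0" using Q_mom_nz f cs by simp
  have z: "sgn (Q r (T' - {i}) (mom i)) = 1 \<or> sgn (Q r (T' - {i}) (mom i)) = -1"
    using qm by (auto simp: sgn_if)
  from fl have "sgn (a i) * sgn (Q r (T' - {i}) (mom i)) = - (sgn (b i) * sgn (Q r (T' - {i}) (mom i)))"
    unfolding q0 q1 by (simp add: sgn_mult)
  then show ?thesis using z by auto
qed

lemma dep_rep0:
  assumes nT: "n \<notin> T'" and f: "finite T'" and d: "dep r (cfg n x0) (insert n T') mu" and mn: "mu n \<noteq> 0"
  shows "\<forall>k\<in>{1..r}. x0 k = (\<Sum>l\<in>T'. (- mu l / mu n) * mom l k)"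
proof
  fix k assume k: "k \<in> {1..r}"
  have "0 = (\<Sum>i\<in>insert n T'. mu i * cfg n x0 i k)" using d k by (simp add: dep_def)
  also have "\<dots> = mu n * x0 k + (\<Sum>i\<in>T'. mu i * mom i k)"
    using nT f by (simp add: cfg_def) (intro sum.cong, auto)
  finally have "x0 k = - (\<Sum>i\<in>T'. mu i * mom i k) / mu n" using mn by (simp add: field_simps)
  also have "\<dots> = (\<Sum>l\<in>T'. (- mu l / mu n) * mom l k)"
    by (simp add: sum_divide_distrib sum_negf[symmetric])
  finally show "x0 k = (\<Sum>l\<in>T'. (- mu l / mu n) * mom l k)" .
qed

lemma dep_of_rep:
  assumes nT: "n \<notin> T'" and f: "finite T'" and r1: "\<forall>k\<in>{1..r}. x1 k = (\<Sum>l\<in>T'. b l * mom l k)"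
  shows "dep r (cfg n x1) (insert n T') (\<lambda>i. if i = n then c else - c * b i)"
  unfolding dep_def
proof
  fix k assume k: "k \<in> {1..r}"
  have "(\<Sum>i\<in>insert n T'. (if i = n then c else - c * b i) * cfg n x1 i k)
      = c * x1 k + (\<Sum>i\<in>T'. - c * (b i * mom i k))"
    using nT f by (simp add: cfg_def) (intro sum.cong, auto)
  also have "\<dots> = 0" using r1 k by (simp add: sum_distrib_left[symmetric] sum_negf)
  finally show "(\<Sum>i\<in>insert n T'. (if i = n then c else - c * b i) * cfg n x1 i k) = 0" .
qed



lemma sgn_helper:
  fixes m c bb :: real
  assumes "c \<noteq> 0" "sgn bb = e * sgn (- m / c)" "e = 1 \<or> e = -1"
  shows "sgn (- c * bb) = e * sgn m"
proof -
  have "sgn (- c * bb) = - sgn c * sgn bb" by (simp add: sgn_mult)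
  also have "\<dots> = - sgn c * e * (- sgn m / sgn c)" using assms(2) by (simp add: sgn_minus)
  also have "\<dots> = e * sgn m" using assms(1) by (simp add: sgn_if)
  finally show ?thesis .
qed

lemma transfer_dep:
  assumes nT: "n \<notin> T'" and fT: "finite T'" and cT: "card T' = r"
    and d: "dep r (cfg n x0) (insert n T') mu" and mnz: "\<forall>i\<in>insert n T'. mu i \<noteq> 0"
    and P: "P \<subseteq> T'"
    and hypP: "\<forall>i\<in>P. \<forall>s\<in>{0..1}. Q r (T' - {i}) (seg x0 x1 s) \<noteq> 0"
    and hypF: "\<forall>i\<in>T' - P. sgn (Q r (T' - {i}) x0) = - sgn (Q r (T' - {i}) x1) \<and> Q r (T' - {i}) x0 \<noteq> 0"
  shows "\<exists>mu'. dep r (cfg n x1) (insert n T') mu' \<and>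
     (\<forall>i\<in>insert n T'. sgn (mu' i) = (if i \<in> T' - P then - sgn (mu i) else sgn (mu i)))"
proof -
  have mn: "mu n \<noteq> 0" using mnz by simp
  have r0: "\<forall>k\<in>{1..r}. x0 k = (\<Sum>l\<in>T'. (- mu l / mu n) * mom l k)" by (rule dep_rep0[OF nT fT d mn])
  obtain b where r1: "\<forall>k\<in>{1..r}. (\<Sum>l\<in>T'. b l * mom l k) = x1 k"
    using solve_cols[OF fT cT mom_indep[OF fT cT], of x1] by blast
  have r1': "\<forall>k\<in>{1..r}. x1 k = (\<Sum>l\<in>T'. b l * mom l k)" using r1 by simp
  define mu' where "mu' = (\<lambda>i. if i = n then mu n else - mu n * b i)"
  have dd: "dep r (cfg n x1) (insert n T') mu'"
    unfolding mu'_def by (rule dep_of_rep[OF nT fT r1'])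
  have "\<forall>i\<in>insert n T'. sgn (mu' i) = (if i \<in> T' - P then - sgn (mu i) else sgn (mu i))"
  proof
    fix i assume i: "i \<in> insert n T'"
    show "sgn (mu' i) = (if i \<in> T' - P then - sgn (mu i) else sgn (mu i))"
    proof (cases "i = n")
      case True then show ?thesis using nT by (simp add: mu'_def)
    next
      case False
      then have iT: "i \<in> T'" using i by simp
      have ai: "- mu i / mu n \<noteq> 0" using mnz iT mn by simp
      show ?thesis
      proof (cases "i \<in> P")
        case True
        have "sgn (b i) = sgn (- mu i / mu n)"
          by (rule sign_preserved[OF fT cT iT r0 r1' ai]) (use hypP True in blast)
        then have "sgn (- mu n * b i) = 1 * sgn (mu i)"
          by (intro sgn_helper[OF mn]) auto
        then show ?thesis using True False by (simp add: mu'_def)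
      next
        case FF: False
        have h: "sgn (Q r (T' - {i}) x0) = - sgn (Q r (T' - {i}) x1)" "Q r (T' - {i}) x0 \<noteq> 0"
          using hypF iT FF by auto
        have "sgn (b i) = - sgn (- mu i / mu n)"
          by (rule sign_flipped[OF fT cT iT r0 r1' h])
        then have "sgn (- mu n * b i) = (-1) * sgn (mu i)"
          by (intro sgn_helper[OF mn]) auto
        then show ?thesis using FF False iT by (simp add: mu'_def)
      qed
    qed
  qed
  then show ?thesis using dd by blast
qed

lemma affine_nz:
  fixes a b s :: real
  assumes "a \<noteq> 0" "sgn a = sgn b" "s \<in> {0..1}"
  shows "(1 - s) * a + s * b \<noteq> 0"
proof (cases "a > 0")
  case True
  then have "b > 0" using assms by (auto simp: sgn_if split: if_splits)
  then have "(1 - s) * a + s * b > 0" using True assms(3)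
    by (cases "s = 0") (auto intro: add_nonneg_pos add_pos_nonneg)
  then show ?thesis by simp
next
  case False
  then have an: "a < 0" using assms by simp
  then have "b < 0" using assms by (auto simp: sgn_if split: if_splits)
  then have "(1 - s) * a + s * b < 0" using an assms(3)
    by (cases "s = 0") (auto intro: add_nonpos_neg add_neg_nonpos simp: mult_nonneg_nonpos mult_pos_neg)
  then show ?thesis by simp
qed

lemma dep_cfg_off_n:
  assumes "n \<notin> T" "dep r (cfg n y) T mu" shows "dep r (cfg n x) T mu"
proof -
  have "\<And>k. (\<Sum>i\<in>T. mu i * cfg n y i k) = (\<Sum>i\<in>T. mu i * cfg n x i k)"
    using assms(1) by (intro sum.cong) (auto simp: cfg_def)
  then show ?thesis using assms(2) by (simp add: dep_def)
qed

lemma Sfam_mem: "S \<subseteq> {1..n-1} \<Longrightarrow> card S + 1 = r \<Longrightarrow> S \<in> Sfam r n"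
  by (simp add: Sfam_def)

lemma partC:
  assumes r1: "r \<ge> 1" and nr: "n \<ge> r + 1"
    and S0: "S0 \<in> Sfam r n" and gy: "generic r n y" and gx: "generic r n x1"
    and same: "\<forall>S\<in>Sfam r n. S \<noteq> S0 \<longrightarrow> sgn (Q r S y) = sgn (Q r S x1)"
    and flip: "sgn (Q r S0 y) = - sgn (Q r S0 x1)"
    and Y: "Y \<in> pm_vecs n" and Yt: "Y \<in> signvecs r n (cfg n x1)"
    and Ydeps: "\<forall>jj\<in>{1..n-1} - S0. \<exists>mu. dep r (cfg n y) (insert jj (insert n S0)) mu \<and>
                   (\<forall>i\<in>insert jj (insert n S0). sgn (mu i) = Y i)"
  shows "(signvecs r n (cfg n x1) - signvecs r n (cfg n y)) \<inter> pm_vecs n = {Y, \<lambda>i. - Y i}"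
proof -
  let ?N = "{1..n}"
  let ?R = "insert n S0"
  have S0sub: "S0 \<subseteq> {1..n-1}" and cS0: "card S0 + 1 = r" using S0 by (auto simp: Sfam_def)
  have fS0: "finite S0" using S0sub finite_subset by blast
  have nS0: "n \<notin> S0" using S0sub nr by force
  have S0N: "S0 \<subseteq> {1..n}"
  proof
    fix x assume "x \<in> S0"
    then have "x \<in> {1..n-1}" using S0sub by blast
    then show "x \<in> {1..n}" by auto
  qed
  have gpy: "general_position r n (cfg n y)" by (rule gp_cfg[OF r1 gy])
  have Ypm: "Y i = 1 \<or> Y i = -1" if "i \<in> ?N" for i using Y that by (simp add: pm_vecs_def)
  have Y0: "Y i = 0" if "i \<notin> ?N" for i using Y that by (simp add: pm_vecs_def)
  have segnz: "\<forall>s::real\<in>{0..1}. Q r S (seg y x1 s) \<noteq> 0" if "S \<in> Sfam r n" "S \<noteq> S0" for S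
  proof
    fix s :: real assume s: "s \<in> {0..1}"
    have "Q r S y \<noteq> 0" using gy that by (simp add: generic_def)
    moreover have "sgn (Q r S y) = sgn (Q r S x1)" using same that by blast
    ultimately show "Q r S (seg y x1 s) \<noteq> 0" unfolding Q_seg using affine_nz s by blast
  qed
  have RN: "?R \<subseteq> ?N" using S0N nr by auto
  have fR: "finite ?R" using fS0 by simp
  have cR: "card ?R = r" using cS0 nS0 fS0 by simp
  show ?thesis
  proof
    show "(signvecs r n (cfg n x1) - signvecs r n (cfg n y)) \<inter> pm_vecs n \<subseteq> {Y, \<lambda>i. - Y i}"
    proof
      fix X assume XX: "X \<in> (signvecs r n (cfg n x1) - signvecs r n (cfg n y)) \<inter> pm_vecs n"
      then have X1: "X \<in> signvecs r n (cfg n x1)" and Xy: "X \<notin> signvecs r n (cfg n y)"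
        and Xpmv: "X \<in> pm_vecs n" by auto
      have Xpm: "X i = 1 \<or> X i = -1" if "i \<in> ?N" for i using Xpmv that by (simp add: pm_vecs_def)
      have X0: "X i = 0" if "i \<notin> ?N" for i using Xpmv that by (simp add: pm_vecs_def)
      obtain T mu where T: "T \<subseteq> ?N" "card T = r + 1" and dT: "dep r (cfg n y) T mu"
        and sT: "\<forall>i\<in>T. sgn (mu i) = X i"
        using gordan_circ[OF gpy r1 _ Xpmv Xy] nr by auto
      have fT: "finite T" using T finite_subset by blast
      have Tne: "T \<noteq> {}" using T by auto
      have Xnz: "\<forall>i\<in>T. X i \<noteq> 0" using Xpm T by fastforce
      have munz: "\<forall>i\<in>T. mu i \<noteq> 0" using sT Xnz by fastforce
      have RT: "?R \<subseteq> T"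
      proof (rule ccontr)
        assume nRT: "\<not> ?R \<subseteq> T"
        show False
        proof (cases "n \<in> T")
          case False
          have "dep r (cfg n x1) T mu" by (rule dep_cfg_off_n[OF False dT])
          then show False using no_tope_of_dep[OF X1 T(1) Tne _ sT Xnz] by blast
        next
          case True
          define T' where "T' = T - {n}"
          have TT: "T = insert n T'" using True by (auto simp: T'_def)
          have nT': "n \<notin> T'" and fT': "finite T'" using fT by (auto simp: T'_def)
          have cT': "card T' = r" using T fT True by (simp add: T'_def card_Diff_singleton)
          have hypP: "\<forall>i\<in>T'. \<forall>s\<in>{0..1}. Q r (T' - {i}) (seg y x1 s) \<noteq> 0"
          proof
            fix i assume i: "i \<in> T'"
            have sub: "T' - {i} \<subseteq> {1..n-1}" using T nT' by (auto simp: T'_def)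
            have "card (T' - {i}) + 1 = r" using cT' i fT' r1 by (simp add: card_Diff_singleton)
            then have inF: "T' - {i} \<in> Sfam r n" using sub by (simp add: Sfam_def)
            have "T' - {i} \<noteq> S0"
            proof
              assume "T' - {i} = S0"
              then have "?R \<subseteq> T" using TT by auto
              then show False using nRT by simp
            qed
            then show "\<forall>s\<in>{0..1}. Q r (T' - {i}) (seg y x1 s) \<noteq> 0" using segnz inF by blast
          qed
          have dT': "dep r (cfg n y) (insert n T') mu" using dT TT by simp
          have munz': "\<forall>i\<in>insert n T'. mu i \<noteq> 0" using munz TT by simp
          have hypF: "\<forall>i\<in>T' - T'. sgn (Q r (T' - {i}) y) = - sgn (Q r (T' - {i}) x1) \<and> Q r (T' - {i}) y \<noteq> 0"
            by simp
          obtain mu' where d': "dep r (cfg n x1) (insert n T') mu'"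
            and s': "\<forall>i\<in>insert n T'. sgn (mu' i) = (if i \<in> T' - T' then - sgn (mu i) else sgn (mu i))"
            using transfer_dep[OF nT' fT' cT' dT' munz' subset_refl hypP hypF] by blast
          have "\<forall>i\<in>T. sgn (mu' i) = X i" using s' sT TT by auto
          then show False using no_tope_of_dep[OF X1 T(1) Tne _ _ Xnz] d' TT by blast
        qed
      qed
      have "card (T - ?R) = 1" using card_Diff_subset[OF fR RT] T cR by simp
      then obtain jj where jj: "T - ?R = {jj}" by (auto simp: card_Suc_eq)
      have TjR: "T = insert jj ?R" using jj RT by auto
      have jjR: "jj \<notin> ?R" using jj by auto
      have jjT: "jj \<in> T" using TjR by simp
      have jjN': "jj \<in> ?N" using jjT T(1) by blast
      have jjN: "jj \<in> {1..n-1} - S0" using jjN' jjR by auto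
      obtain muY where dY: "dep r (cfg n y) T muY" and sY: "\<forall>i\<in>T. sgn (muY i) = Y i"
        using Ydeps jjN TjR by metis
      obtain c where c: "\<forall>i\<in>T. muY i = c * mu i"
        using dep_unique[OF gpy T dT dY munz] by blast
      define e where "e = sgn c"
      have "Y jj \<noteq> 0" using Ypm T jjT by fastforce
      then have "muY jj \<noteq> 0" using sY jjT by fastforce
      then have cnz: "c \<noteq> 0" using c jjT by auto
      have e1: "e = 1 \<or> e = -1" using cnz by (auto simp: e_def sgn_if)
      have onT: "X i = e * Y i" if i: "i \<in> T" for i
      proof -
        have "Y i = sgn (muY i)" using sY i by simp
        also have "\<dots> = e * X i" using c sT i by (simp add: sgn_mult e_def)
        finally have "Y i = e * X i" .
        then show ?thesis using e1 by auto
      qed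
      have other: "X i = e * Y i" if i: "i \<in> {1..n-1} - S0" "i \<noteq> jj" for i
      proof (rule ccontr)
        assume ne: "X i \<noteq> e * Y i"
        have iN: "i \<in> ?N" using i by auto
        have sub2: "insert n (insert i S0) \<subseteq> ?N" using iN S0N nr by auto
        then have Xi: "X i = - e * Y i" using ne Xpm[OF iN] Ypm[OF iN] e1 by auto
        obtain muY' where dY': "dep r (cfg n y) (insert i ?R) muY'"
          and sY': "\<forall>l\<in>insert i ?R. sgn (muY' l) = Y l"
          using Ydeps i by blast
        define T2 where "T2 = insert i S0"
        have nT2: "n \<notin> T2" using i nS0 by (auto simp: T2_def)
        have fT2: "finite T2" using fS0 by (simp add: T2_def)
        have iS0: "i \<notin> S0" using i by simp
        have cT2: "card T2 = r" using cS0 fS0 iS0 by (simp add: T2_def)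
        have ins: "insert n T2 = insert i ?R" by (auto simp: T2_def)
        have munz': "\<forall>l\<in>insert n T2. muY' l \<noteq> 0"
        proof
          fix l assume l: "l \<in> insert n T2"
          then have "l \<in> ?N" using sub2 by (auto simp: T2_def)
          then have Yl: "Y l \<noteq> 0" using Ypm by fastforce
          have "sgn (muY' l) = Y l" using sY' l ins by auto
          then show "muY' l \<noteq> 0" using Yl by auto
        qed
        have hypP: "\<forall>l\<in>S0. \<forall>s\<in>{0..1}. Q r (T2 - {l}) (seg y x1 s) \<noteq> 0"
        proof
          fix l assume l: "l \<in> S0"
          have sub: "T2 - {l} \<subseteq> {1..n-1}" using i S0sub by (auto simp: T2_def)
          have "card (T2 - {l}) + 1 = r" using cT2 l fT2 r1 by (simp add: T2_def card_Diff_singleton)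
          then have inF: "T2 - {l} \<in> Sfam r n" using sub by (simp add: Sfam_def)
          have "T2 - {l} \<noteq> S0" using iS0 l by (auto simp: T2_def)
          then show "\<forall>s\<in>{0..1}. Q r (T2 - {l}) (seg y x1 s) \<noteq> 0" using segnz inF by blast
        qed
        have T2S0: "T2 - S0 = {i}" using iS0 by (auto simp: T2_def)
        have T2i: "T2 - {i} = S0" using iS0 by (auto simp: T2_def)
        have hypF: "\<forall>l\<in>T2 - S0. sgn (Q r (T2 - {l}) y) = - sgn (Q r (T2 - {l}) x1) \<and> Q r (T2 - {l}) y \<noteq> 0"
          using flip gy S0 T2S0 T2i by (simp add: generic_def)
        obtain mu'' where d'': "dep r (cfg n x1) (insert n T2) mu''"
          and s'': "\<forall>l\<in>insert n T2. sgn (mu'' l) = (if l \<in> T2 - S0 then - sgn (muY' l) else sgn (muY' l))"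
          using transfer_dep[OF nT2 fT2 cT2 _ munz' _ hypP hypF] dY' ins by (auto simp: T2_def)
        define mu3 where "mu3 = (\<lambda>l. e * mu'' l)"
        have d3: "dep r (cfg n x1) (insert n T2) mu3"
          using d'' unfolding dep_def mu3_def by (simp add: mult.assoc sum_distrib_left[symmetric])
        have s3: "\<forall>l\<in>insert n T2. sgn (mu3 l) = X l"
        proof
          fix l assume l: "l \<in> insert n T2"
          show "sgn (mu3 l) = X l"
          proof (cases "l = i")
            case True
            have "i \<in> insert n T2" "i \<in> T2 - S0" using T2S0 by (auto simp: T2_def)
            then have "sgn (mu'' i) = - sgn (muY' i)" using s'' by auto
            also have "sgn (muY' i) = Y i" using sY' by simp
            finally have "sgn (mu3 i) = e * (- Y i)" by (simp add: mu3_def sgn_mult e_def)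
            then show ?thesis using True Xi by simp
          next
            case False
            then have lR: "l \<in> ?R" using l by (auto simp: T2_def)
            then have lT: "l \<in> T" using RT by auto
            have lnot: "l \<notin> T2 - S0" using False T2S0 by simp
            have "sgn (mu'' l) = sgn (muY' l)" using s'' l lnot by auto
            also have "\<dots> = Y l" using sY' lR by auto
            finally have "sgn (mu3 l) = e * Y l" by (simp add: mu3_def sgn_mult e_def)
            then show ?thesis using onT[OF lT] e1 by auto
          qed
        qed
        have sub3: "insert n T2 \<subseteq> ?N" using sub2 by (simp add: T2_def)
        have X0nz: "\<forall>l\<in>insert n T2. X l \<noteq> 0" using Xpm sub3 by fastforce
        show False using no_tope_of_dep[OF X1 sub3 _ d3 s3 X0nz] by blast
      qed
      have allN: "X i = e * Y i" for i
      proof (cases "i \<in> ?N")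
        case True
        show ?thesis
        proof (cases "i \<in> T")
          case True then show ?thesis using onT by simp
        next
          case False
          have iN: "i \<in> ?N" using \<open>i \<in> ?N\<close> .
          have "i \<noteq> n" "i \<notin> S0" "i \<noteq> jj" using False RT jjT by auto
          then have "i \<in> {1..n-1} - S0" "i \<noteq> jj" using iN by auto
          then show ?thesis using other by simp
        qed
      next
        case False then show ?thesis using X0 Y0 by simp
      qed
      show "X \<in> {Y, \<lambda>i. - Y i}"
      proof (cases "e = 1")
        case True then have "X = Y" using allN by (intro ext) simp
        then show ?thesis by simp
      next
        case False then have "e = -1" using e1 by simp
        then have "X = (\<lambda>i. - Y i)" using allN by (intro ext) simp
        then show ?thesis by simp
      qed
    qed
  next
    obtain jj where jj: "jj \<in> {1..n-1} - S0"
    proof -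
      have "card S0 < card {1..n-1}" using cS0 nr by simp
      then have "\<not> {1..n-1} \<subseteq> S0" using fS0 by (meson card_mono not_le)
      then show ?thesis using that by blast
    qed
    obtain muY where dY: "dep r (cfg n y) (insert jj (insert n S0)) muY"
      and sY: "\<forall>i\<in>insert jj (insert n S0). sgn (muY i) = Y i" using Ydeps jj by blast
    have sub: "insert jj (insert n S0) \<subseteq> ?N" using jj S0N nr by auto
    have Ynz: "\<forall>i\<in>insert jj (insert n S0). Y i \<noteq> 0" using Ypm sub by fastforce
    have nY: "Y \<notin> signvecs r n (cfg n y)"
      using no_tope_of_dep[OF _ sub _ dY sY Ynz] by blast
    have dY': "dep r (cfg n y) (insert jj (insert n S0)) (\<lambda>i. - muY i)"
      using dY unfolding dep_def by (simp add: sum_negf)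
    have "\<forall>i\<in>insert jj (insert n S0). sgn (- muY i) = - Y i" using sY by (simp add: sgn_minus)
    moreover have "\<forall>i\<in>insert jj (insert n S0). - Y i \<noteq> 0" using Ynz by simp
    ultimately have nY': "(\<lambda>i. - Y i) \<notin> signvecs r n (cfg n y)"
      using no_tope_of_dep[OF _ sub _ dY'] by blast
    show "{Y, \<lambda>i. - Y i} \<subseteq> (signvecs r n (cfg n x1) - signvecs r n (cfg n y)) \<inter> pm_vecs n"
      using Yt signvecs_neg[OF Yt] nY nY' Y pm_neg[OF Y] by auto
  qed
qed



lemma ip_add2: "ip r x (\<lambda>k. a * u k + b * v k) = a * ip r x u + b * ip r x v"
  unfolding ip_def by (simp add: sum.distrib sum_distrib_left algebra_simps)

lemma seg_0: "seg x0 x1 0 = x0" and seg_1: "seg x0 x1 1 = x1"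
  by (auto simp: seg_def)

lemma s0_range:
  fixes a b :: real
  assumes "a \<noteq> 0" "sgn a = - sgn b"
  shows "a / (a - b) \<in> {0<..<1}"
proof (cases "a > 0")
  case True
  then have "b < 0" using assms by (auto simp: sgn_if split: if_splits)
  then show ?thesis using True by (auto simp: divide_simps)
next
  case False
  then have an: "a < 0" using assms by simp
  then have "b > 0" using assms by (auto simp: sgn_if split: if_splits)
  then show ?thesis using an by (auto simp: divide_simps)
qed

lemma affine_zero_iff:
  fixes a b t :: real
  assumes "a \<noteq> b"
  shows "(1 - t) * a + t * b = 0 \<longleftrightarrow> t = a / (a - b)"
  using assms by (auto simp: field_simps)

lemma mutation_from_adj:
  assumes r1: "r \<ge> 1" and nr: "n \<ge> r + 1"
    and S0: "S0 \<in> Sfam r n" and g0: "generic r n x0" and g1: "generic r n x1"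
    and same: "\<forall>S\<in>Sfam r n. S \<noteq> S0 \<longrightarrow> sgn (Q r S x0) = sgn (Q r S x1)"
    and flip: "sgn (Q r S0 x0) = - sgn (Q r S0 x1)"
  shows "mutation_path r n (cfg n x0) (cfg n x1) (\<lambda>s. cfg n (seg x0 x1 s))
           (Q r S0 x0 / (Q r S0 x0 - Q r S0 x1)) (insert n S0)"
proof -
  define a where "a = Q r S0 x0"
  define b where "b = Q r S0 x1"
  define s0 where "s0 = a / (a - b)"
  let ?P = "\<lambda>s. cfg n (seg x0 x1 s)"
  let ?R = "insert n S0"
  have S0sub: "S0 \<subseteq> {1..n-1}" and cS0: "card S0 + 1 = r" using S0 by (auto simp: Sfam_def)
  have fS0: "finite S0" using S0sub finite_subset by blast
  have nS0: "n \<notin> S0" using S0sub nr by force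
  have S0lt: "\<forall>i\<in>S0. i < n" using S0sub nr by force
  have an: "a \<noteq> 0" using g0 S0 by (simp add: generic_def a_def)
  have ab: "sgn a = - sgn b" using flip by (simp add: a_def b_def)
  have aneb: "a \<noteq> b" using an ab by (auto simp: sgn_if split: if_splits)
  have s0r: "s0 \<in> {0<..<1}" unfolding s0_def by (rule s0_range[OF an ab])
  have QS0: "Q r S0 (seg x0 x1 t) = (1 - t) * a + t * b" for t by (simp add: Q_seg a_def b_def)
  have QS0z: "Q r S0 (seg x0 x1 t) = 0 \<longleftrightarrow> t = s0" for t
    unfolding QS0 s0_def by (rule affine_zero_iff[OF aneb])
  have Qother: "Q r S (seg x0 x1 t) \<noteq> 0" if "S \<in> Sfam r n" "S \<noteq> S0" "t \<in> {0..1}" for S t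
  proof -
    have "Q r S x0 \<noteq> 0" using g0 that by (simp add: generic_def)
    moreover have "sgn (Q r S x0) = sgn (Q r S x1)" using same that by blast
    ultimately show ?thesis unfolding Q_seg using affine_nz that(3) by blast
  qed
  have gen_t: "generic r n (seg x0 x1 t)" if "t \<in> {0..1}" "t \<noteq> s0" for t
    unfolding generic_def using Qother that QS0z by blast
  have gp_t: "general_position r n (?P t)" if "t \<in> {0..1}" "t \<noteq> s0" for t
    by (rule gp_cfg[OF r1 gen_t[OF that]])
  have S0N: "S0 \<subseteq> {1..n}"
  proof
    fix x assume "x \<in> S0"
    then have "x \<in> {1..n-1}" using S0sub by blast
    then show "x \<in> {1..n}" by auto
  qed
  have Rsub: "?R \<subseteq> {1..n}" using S0N nr by auto
  have cR: "card ?R = r" using cS0 nS0 fS0 by simp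
  have depR: "\<not> lin_indep_cols r (?P s0) ?R"
    using Q_zero_dep[OF fS0 cS0 nS0] QS0z by simp
  have uniq: "S = ?R" if S: "S \<subseteq> {1..n}" "card S = r" "\<not> lin_indep_cols r (?P s0) S" for S
  proof -
    have fS: "finite S" using S(1) finite_subset by blast
    have nS: "n \<in> S"
    proof (rule ccontr)
      assume "n \<notin> S"
      then show False using cfg_fixed_indep[OF fS S(2)] S(3) by blast
    qed
    define S' where "S' = S - {n}"
    have fS': "finite S'" and nS': "n \<notin> S'" using fS by (auto simp: S'_def)
    have cS': "card S' + 1 = r" using S fS nS r1 by (simp add: S'_def card_Diff_singleton)
    have SS': "S = insert n S'" using nS by (auto simp: S'_def)
    have S'sub: "S' \<subseteq> {1..n-1}" using S by (auto simp: S'_def)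
    have "Q r S' (seg x0 x1 s0) = 0"
      using dep_Q_zero[OF fS' cS' nS'] S(3) SS' by simp
    then have "S' = S0" using Qother[of S' s0] S'sub cS' s0r by (auto simp: Sfam_def)
    then show ?thesis using SS' by simp
  qed
  have sub_indep: "lin_indep_cols r (?P s0) S" if S: "S \<subseteq> {1..n}" "card S = r - 1" for S
  proof -
    have fS: "finite S" using S(1) finite_subset by blast
    have "card ({1..n} - S) \<ge> 2" using S fS nr r1 by (simp add: card_Diff_subset)
    then obtain e1 e2 where e: "e1 \<in> {1..n} - S" "e2 \<in> {1..n} - S" "e1 \<noteq> e2"
      by (metis One_nat_def card_le_Suc0_iff_eq not_less_eq_eq numeral_2_eq_2 finite_Diff finite_atLeastAtMost)
    obtain e where ee: "e \<in> {1..n} - S" "insert e S \<noteq> ?R"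
    proof (cases "insert e1 S = ?R")
      case True
      then have "insert e2 S \<noteq> ?R" using e by auto
      then show ?thesis using that e by blast
    next
      case False then show ?thesis using that e by blast
    qed
    have sub: "insert e S \<subseteq> {1..n}" using ee S by auto
    have ce: "card (insert e S) = r" using ee fS S r1 by simp
    have "lin_indep_cols r (?P s0) (insert e S)" using uniq[OF sub ce] ee by blast
    then show ?thesis using lin_indep_subset fS by blast
  qed
  obtain h where h: "\<forall>x. det_cols r (cfg n x) ?R = ip r x h"
    using det_lin[OF fS0 cS0 S0lt] by blast
  define D0 where "D0 = ip r x0 h"
  define D1 where "D1 = ip r x1 h"
  have Dt: "det_cols r (?P t) ?R = (1 - t) * D0 + t * D1" for t
    using h by (simp add: seg_def ip_add D0_def D1_def)
  have Dz: "det_cols r (?P s0) ?R = 0" using depR lin_indep_iff_det[of ?R r] fS0 cR by auto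
  have D0nz: "D0 \<noteq> 0"
  proof -
    have "lin_indep_cols r (?P 0) ?R" using gp_t[of 0] s0r Rsub cR unfolding general_position_def by auto
    then have "det_cols r (?P 0) ?R \<noteq> 0" using lin_indep_iff_det[of ?R r] fS0 cR by auto
    then show ?thesis using Dt[of 0] by simp
  qed
  have s0pos: "s0 > 0" "s0 < 1" using s0r by auto
  have D1eq: "D1 = - (1 - s0) * D0 / s0" using Dz Dt[of s0] s0pos by (simp add: field_simps)
  have Dform: "det_cols r (?P t) ?R = D0 * (1 - t / s0)" for t
    unfolding Dt D1eq using s0pos by (simp add: field_simps)
  have signs: "sgn (det_cols r (?P s) ?R) = - sgn (det_cols r (?P s') ?R)"
    if "s \<in> {0..<s0}" "s' \<in> {s0<..1}" for s s'
  proof -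
    have "s / s0 < 1" using that s0pos by (simp add: divide_less_eq)
    then have p1: "1 - s / s0 > 0" by simp
    have "s' / s0 > 1" using that s0pos by (simp add: less_divide_eq)
    then have p2: "1 - s' / s0 < 0" by simp
    show ?thesis unfolding Dform using p1 p2 D0nz by (simp add: sgn_mult)
  qed
  have cont: "continuous_on {0..1} (\<lambda>t. ?P t i k)" for i k
  proof (cases "i = n")
    case True
    have "continuous_on {0..1} (\<lambda>t::real. (1 - t) * x0 k + t * x1 k)"
      by (intro continuous_intros)
    then show ?thesis using True by (simp add: cfg_def seg_def)
  next
    case False then show ?thesis by (simp add: cfg_def)
  qed
  show ?thesis
    unfolding mutation_path_def s0_def[symmetric] a_def[symmetric] b_def[symmetric]
    using s0r gp_t Rsub cR depR uniq sub_indep signs cont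
    by (auto simp: seg_0 seg_1)
qed

lemma differ_from_adj:
  assumes "r \<ge> 1" "n \<ge> r + 1" "S0 \<in> Sfam r n" "generic r n x0" "generic r n x1"
    "\<forall>S\<in>Sfam r n. S \<noteq> S0 \<longrightarrow> sgn (Q r S x0) = sgn (Q r S x1)"
    "sgn (Q r S0 x0) = - sgn (Q r S0 x1)"
  shows "differ_by_mutation r n (cfg n x0) (cfg n x1)"
  unfolding differ_by_mutation_def using mutation_from_adj[OF assms] by blast



lemma pick_avoid:
  fixes f :: "nat \<Rightarrow> 'a"
  assumes "inj f" "finite B"
  shows "\<exists>l. f l \<notin> B"
proof (rule ccontr)
  assume "\<not> ?thesis"
  then have "range f \<subseteq> B" by auto
  then have "finite (range f)" using assms(2) finite_subset by blast
  then have "finite (UNIV :: nat set)" using assms(1) finite_imageD by blast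
  then show False by simp
qed

lemma polyfun_finite_roots_ne:
  fixes c :: "nat \<Rightarrow> real"
  assumes "i \<le> N" "c i \<noteq> 0"
  shows "finite {z. (\<Sum>d\<le>N. c d * z ^ d) = 0}"
  using polyfun_roots_finite[of c i N] assms by blast

lemma sum_as_poly:
  fixes g :: "nat \<Rightarrow> real"
  assumes "finite A" "A \<subseteq> {..N}"
  shows "(\<Sum>i\<in>A. g i * z ^ i) = (\<Sum>d\<le>N. (if d \<in> A then g d else 0) * z ^ d)"
proof -
  have "(\<Sum>d\<le>N. (if d \<in> A then g d else 0) * z ^ d) = (\<Sum>d\<in>A. (if d \<in> A then g d else 0) * z ^ d)"
    using assms by (intro sum.mono_neutral_right) auto
  then show ?thesis by simp
qed

lemma choose_eta:
  fixes S0 :: "nat set" and sg :: "nat \<Rightarrow> real"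
  assumes fS0: "finite S0" and sgnz: "\<forall>i\<in>S0. sg i \<noteq> 0"
    and cardS: "\<forall>S\<in>Sfam r n. card S = card S0" and S0lt: "S0 \<subseteq> {..N}"
    and nzQ: "\<forall>S\<in>Sfam r n. \<forall>i\<in>S0 - S. Q r S (mom i) \<noteq> 0"
    and fin: "\<forall>S\<in>Sfam r n. finite S"
    and e0: "e0 > 0"
  shows "\<exists>eta. 0 < eta \<and> eta \<le> e0 \<and>
    (\<forall>S\<in>Sfam r n. S \<noteq> S0 \<longrightarrow> (\<Sum>i\<in>S0. sg i * eta ^ i * Q r S (mom i)) \<noteq> 0)"
proof -
  define cS where "cS = (\<lambda>S d. if d \<in> S0 then sg d * Q r S (mom d) else 0)"
  define B where "B = (\<Union>S\<in>Sfam r n - {S0}. {z. (\<Sum>d\<le>N. cS S d * z ^ d) = 0})"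
  have fB: "finite B"
    unfolding B_def
  proof (intro finite_UN_I)
    show "finite (Sfam r n - {S0})" using Sfam_finite by simp
  next
    fix S assume S: "S \<in> Sfam r n - {S0}"
    have "\<not> S0 \<subseteq> S"
    proof
      assume "S0 \<subseteq> S"
      moreover have "card S = card S0" using cardS S by simp
      ultimately have "S0 = S" using fin S by (simp add: card_subset_eq)
      then show False using S by simp
    qed
    then obtain i where i: "i \<in> S0" "i \<notin> S" by blast
    have "cS S i \<noteq> 0" using i sgnz nzQ S by (simp add: cS_def)
    moreover have "i \<le> N" using i S0lt by auto
    ultimately show "finite {z. (\<Sum>d\<le>N. cS S d * z ^ d) = 0}"
      by (rule polyfun_finite_roots_ne[rotated])
  qed
  define f where "f = (\<lambda>l::nat. e0 / (real l + 1))"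
  have inj: "inj f" unfolding f_def inj_on_def using e0 by (auto simp: field_simps)
  obtain l where l: "f l \<notin> B" using pick_avoid[OF inj fB] by blast
  have pos: "f l > 0" "f l \<le> e0" using e0 by (auto simp: f_def field_simps)
  have "\<forall>S\<in>Sfam r n. S \<noteq> S0 \<longrightarrow> (\<Sum>i\<in>S0. sg i * f l ^ i * Q r S (mom i)) \<noteq> 0"
  proof (intro ballI impI)
    fix S assume S: "S \<in> Sfam r n" "S \<noteq> S0"
    have "(\<Sum>i\<in>S0. sg i * f l ^ i * Q r S (mom i)) = (\<Sum>i\<in>S0. (sg i * Q r S (mom i)) * f l ^ i)"
      by (simp add: algebra_simps)
    also have "\<dots> = (\<Sum>d\<le>N. cS S d * f l ^ d)"
      unfolding cS_def by (rule sum_as_poly[OF fS0 S0lt])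
    finally show "(\<Sum>i\<in>S0. sg i * f l ^ i * Q r S (mom i)) \<noteq> 0"
      using l S by (auto simp: B_def)
  qed
  then show ?thesis using pos by blast
qed



lemma Q_add1: "Q r S (\<lambda>kk. x kk + c * y kk) = Q r S x + c * Q r S y"
  using Q_add[of r S 1 x c y] by simp

lemma sgn_pert: fixes a e :: real assumes "\<bar>e\<bar> < \<bar>a\<bar>" shows "sgn (a + e) = sgn a" "a + e \<noteq> 0"
  using assms by (auto simp: sgn_if abs_if split: if_splits)

lemma exp_qsign:
  assumes r3: "r \<ge> 3" and p: "p \<ge> r - 1" and i: "i \<notin> insert p {1..r-2}" "1 \<le> i"
  shows "(i < p \<longrightarrow> Q r (insert p {1..r-2}) (mom i) \<le> -1) \<and> (p < i \<longrightarrow> Q r (insert p {1..r-2}) (mom i) \<ge> 1)"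
proof -
  let ?S = "insert p {1..r-2}"
  have pn: "p \<notin> {1..r-2}" using p r3 by auto
  have cS: "card ?S < r" using pn r3 by simp
  have ir: "i \<ge> r - 1" using i by auto
  have "Q r ?S (mom i) = (real i - real p) * (\<Prod>s\<in>{1..r-2}. real i - real s)"
    using Q_mom[of ?S r i] cS pn by simp
  moreover have b1: "(\<Prod>s\<in>{1..r-2}. real i - real s) \<ge> 1"
    by (rule prod_ge_1) (use ir in auto)
  moreover have "i \<noteq> p" using i by auto
  ultimately show ?thesis
  proof -
    assume A: "Q r ?S (mom i) = (real i - real p) * (\<Prod>s\<in>{1..r-2}. real i - real s)"
    define B where "B = (\<Prod>s\<in>{1..r-2}. real i - real s)"
    have BB: "B \<ge> 1" using b1 by (simp add: B_def)
    have A': "Q r ?S (mom i) = (real i - real p) * B" using A by (simp add: B_def)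
    have l: "Q r ?S (mom i) \<le> -1" if ip: "i < p"
    proof -
      have a: "real i - real p \<le> -1" using ip by simp
      have "(real i - real p) * B \<le> (real i - real p) * 1"
        using a BB by (intro mult_left_mono_neg) auto
      then have "(real i - real p) * B \<le> real i - real p" by simp
      then show ?thesis using A' a by linarith
    qed
    have g: "Q r ?S (mom i) \<ge> 1" if ip: "p < i"
    proof -
      have a: "real i - real p \<ge> 1" using ip by simp
      have "1 * 1 \<le> (real i - real p) * B"
        using a BB by (intro mult_mono) auto
      then have "1 \<le> (real i - real p) * B" by simp
      then show ?thesis using A' by linarith
    qed
    show ?thesis using l g by blast
  qed
qed



lemma ip2: "(r::nat) \<ge> 2 \<Longrightarrow> ip r y (\<lambda>kk. if kk = 1 then a else if kk = 2 then b else 0) = y 1 * a + y 2 * b"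
proof -
  assume r: "r \<ge> 2"
  have "ip r y (\<lambda>kk. if kk = 1 then a else if kk = 2 then b else 0) = (\<Sum>kk\<in>{1,2}. y kk * (if kk = 1 then a else if kk = 2 then b else 0))"
    unfolding ip_def using r by (intro sum.mono_neutral_right) auto
  then show ?thesis by simp
qed

lemma mom1: "mom i 1 = 1" and mom2: "mom i 2 = real i"
  by (auto simp: mom_def)

lemma exp_setup:
  assumes r3: "r \<ge> 3" and nr: "n \<ge> r + 1" and j1: "1 \<le> j" and j2: "j \<le> (r - 1) div 2" and kn: "k + r + 1 \<le> n"
  defines "p \<equiv> k + r - 1" and "S0 \<equiv> insert (k + r - 1) {1..r-2}" and "m \<equiv> n - 1"
  shows "j \<le> r - 2" "p \<ge> r - 1" "p \<le> n - 2" "p \<notin> {1..r-2}" "finite S0" "card S0 + 1 = r"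
    "S0 \<subseteq> {1..n-1}" "S0 \<in> Sfam r n" "m \<notin> S0" "m \<in> {1..n-1}" "m \<noteq> n" "\<forall>s\<in>S0. s < m"
    "S0 \<subseteq> {..p}" "1 \<in> S0" "{1..j} \<subseteq> S0" "p < m" "j < p"
proof -
  show jr: "j \<le> r - 2" using j2 r3 by presburger
  show "p \<ge> r - 1" "p \<le> n - 2" "p \<notin> {1..r-2}" "p < m" using kn r3 by (auto simp: p_def m_def)
  show "finite S0" by (simp add: S0_def)
  have "k + r - 1 \<notin> {1..r-2}" using r3 by auto
  then show "card S0 + 1 = r" using r3 by (simp add: S0_def)
  show S0s: "S0 \<subseteq> {1..n-1}" using kn r3 by (auto simp: S0_def)
  then show "S0 \<in> Sfam r n" using \<open>card S0 + 1 = r\<close> by (simp add: Sfam_def)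
  show "m \<notin> S0" "m \<in> {1..n-1}" "m \<noteq> n" "\<forall>s\<in>S0. s < m" using kn r3 by (auto simp: S0_def m_def)
  show "S0 \<subseteq> {..p}" "1 \<in> S0" using r3 by (auto simp: S0_def p_def)
  show "{1..j} \<subseteq> S0" using jr by (auto simp: S0_def)
  show "j < p" using jr r3 by (simp add: p_def)
qed



lemma exper:
  assumes r3: "r \<ge> 3" and nr: "n \<ge> r + 1" and j1: "1 \<le> j" and j2: "j \<le> (r - 1) div 2" and kn: "k + r + 1 \<le> n"
  shows "\<exists>x0 x1 S0 Y. S0 \<in> Sfam r n \<and> generic r n x0 \<and> generic r n x1 \<and> x0 1 > 0 \<and> x1 1 > 0 \<and>
     (\<forall>S\<in>Sfam r n. S \<noteq> S0 \<longrightarrow> sgn (Q r S x0) = sgn (Q r S x1)) \<and> sgn (Q r S0 x0) = - sgn (Q r S0 x1) \<and>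
     Y \<in> pm_vecs n \<and> Y \<in> signvecs r n (cfg n x1) \<and>
     (\<forall>jj\<in>{1..n-1} - S0. \<exists>mu. dep r (cfg n x0) (insert jj (insert n S0)) mu \<and>
         (\<forall>i\<in>insert jj (insert n S0). sgn (mu i) = Y i)) \<and>
     card (insert n S0 \<inter> {i\<in>{1..n}. Y i = -1}) = j \<and> card ({i\<in>{1..n}. Y i = -1} - insert n S0) = k"
proof -
  define p where "p = k + r - 1"
  define S0 where "S0 = insert p {1..r-2}"
  define m where "m = n - 1"
  have S0eq: "S0 = insert p {1..r-2}" by (simp add: S0_def)
  have jr: "j \<le> r - 2" using j2 r3 by presburger
  have pge: "p \<ge> r - 1" and ple: "p \<le> n - 2" and pnot: "p \<notin> {1..r-2}" and pm: "p < m"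
    using kn r3 by (auto simp: p_def m_def)
  have fS0: "finite S0" by (simp add: S0_def)
  have cS0: "card S0 + 1 = r" using pnot r3 by (simp add: S0_def)
  have S0sub: "S0 \<subseteq> {1..n-1}" using kn r3 by (auto simp: S0_def p_def)
  have S0F: "S0 \<in> Sfam r n" using S0sub cS0 by (simp add: Sfam_def)
  have mS0: "m \<notin> S0" and mN: "m \<in> {1..n-1}" and mn: "m \<noteq> n" and mgt: "\<forall>s\<in>S0. s < m"
    using kn r3 by (auto simp: S0_def m_def p_def)
  have S0le: "S0 \<subseteq> {..p}" and oneS0: "1 \<in> S0" using r3 by (auto simp: S0_def p_def)
  have jS0: "{1..j} \<subseteq> S0" using jr by (auto simp: S0_def)
  have jp: "j < p" using jr r3 by (simp add: p_def)
  have nS0: "n \<notin> S0" using S0sub nr by force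
  have S0N: "S0 \<subseteq> {1..n}"
  proof
    fix x assume "x \<in> S0"
    then have "x \<in> {1..n-1}" using S0sub by blast
    then show "x \<in> {1..n}" by auto
  qed
  have momS: "mom i (Suc 0) = 1" "mom i 1 = 1" "mom i (Suc (Suc 0)) = real i" "mom i 2 = real i" for i
    by (auto simp: mom_def numeral_2_eq_2)
  have cS0r: "card S0 < r" using cS0 by simp
  define sg where "sg = (\<lambda>i::nat. if i \<le> j then (1::real) else -1)"
  have sgnz: "\<forall>i\<in>S0. sg i \<noteq> 0" by (simp add: sg_def)
  have cardS: "\<forall>S\<in>Sfam r n. card S = card S0" using cS0 by (auto simp: Sfam_def)
  have finS: "\<forall>S\<in>Sfam r n. finite S" by (auto simp: Sfam_def intro: finite_subset)
  have nzQ: "\<forall>S\<in>Sfam r n. \<forall>i\<in>S0 - S. Q r S (mom i) \<noteq> 0"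
  proof (intro ballI)
    fix S i assume S: "S \<in> Sfam r n" and i: "i \<in> S0 - S"
    have "card S < r" using S by (auto simp: Sfam_def)
    then show "Q r S (mom i) \<noteq> 0" using Q_mom_nz finS S i by blast
  qed
  have e0: "1 / (2 * real r) > 0" using r3 by simp
  obtain eta where eta: "0 < eta" "eta \<le> 1 / (2 * real r)"
    and etanz: "\<forall>S\<in>Sfam r n. S \<noteq> S0 \<longrightarrow> (\<Sum>i\<in>S0. sg i * eta ^ i * Q r S (mom i)) \<noteq> 0"
    using choose_eta[OF fS0 sgnz cardS S0le nzQ finS e0] by blast
  have "1 / (2 * real r) \<le> 1" using r3 by (simp add: field_simps)
  then have eta1: "eta \<le> 1" using eta by linarith
  define cf where "cf = (\<lambda>i. sg i * eta ^ i)"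
  define P0 where "P0 = (\<lambda>kk. \<Sum>i\<in>S0. cf i * mom i kk)"
  have QP0: "Q r S P0 = (\<Sum>i\<in>S0. cf i * Q r S (mom i))" for S
    by (rule Q_rep[OF fS0]) (simp add: P0_def)
  have QP0nz: "Q r S P0 \<noteq> 0" if "S \<in> Sfam r n" "S \<noteq> S0" for S
    using etanz that unfolding QP0 cf_def by (simp add: mult.assoc)
  have QP0S0: "Q r S0 P0 = 0"
    unfolding QP0 using Q_mom_zero[OF fS0 cS0r] by simp
  have cfnz: "cf i \<noteq> 0" for i using eta by (simp add: cf_def sg_def)
  have sgncf: "sgn (cf i) = sg i" for i using eta by (simp add: cf_def sg_def sgn_mult)
  have P01: "P0 1 > 0"
  proof -
    have "P0 1 = (\<Sum>i\<in>S0. cf i)" by (simp add: P0_def mom_def)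
    also have "\<dots> = cf 1 + (\<Sum>i\<in>S0 - {1}. cf i)" using sum.remove[OF fS0 oneS0] by simp
    also have "cf 1 = eta" using j1 by (simp add: cf_def sg_def)
    finally have A: "P0 1 = eta + (\<Sum>i\<in>S0 - {1}. cf i)" .
    have "\<forall>i\<in>S0 - {1}. cf i \<ge> - (eta ^ 2)"
    proof
      fix i assume i: "i \<in> S0 - {1}"
      then have i2: "i \<ge> 2" using S0sub by fastforce
      have "eta ^ i \<le> eta ^ 2" using eta eta1 i2 by (simp add: power_decreasing)
      moreover have "eta ^ i \<ge> 0" "eta ^ 2 \<ge> 0" using eta by auto
      ultimately show "cf i \<ge> - (eta ^ 2)" by (auto simp: cf_def sg_def)
    qed
    then have "(\<Sum>i\<in>S0 - {1}. cf i) \<ge> (\<Sum>i\<in>S0 - {1}. - (eta ^ 2))" by (intro sum_mono) auto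
    also have "(\<Sum>i\<in>S0 - {1}. - (eta ^ 2)) = - (real (r - 2) * eta ^ 2)"
    proof -
      have "card (S0 - {1}) = r - 2" using cS0 oneS0 fS0 by (simp add: card_Diff_singleton)
      then show ?thesis by simp
    qed
    finally have B: "(\<Sum>i\<in>S0 - {1}. cf i) \<ge> - (real (r - 2) * eta ^ 2)" .
    have "real (r - 2) * eta \<le> real r * eta" using eta by (intro mult_right_mono) auto
    also have "\<dots> \<le> 1 / 2" using eta r3 by (simp add: field_simps)
    finally have "real (r - 2) * eta * eta \<le> eta / 2" using eta by (simp add: mult_right_mono)
    then have "real (r - 2) * eta ^ 2 \<le> eta / 2" by (simp add: power2_eq_square mult.assoc)
    then show ?thesis using A B eta by linarith
  qed
  define beta where "beta = (\<lambda>jj. SOME b. \<forall>kk\<in>{1..r}. (\<Sum>i\<in>insert jj S0. b i * mom i kk) = mom m kk)"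
  have betap: "\<forall>kk\<in>{1..r}. (\<Sum>i\<in>insert jj S0. beta jj i * mom i kk) = mom m kk"
    if jj: "jj \<in> {1..n-1} - S0" for jj
  proof -
    have f: "finite (insert jj S0)" using fS0 by simp
    have c: "card (insert jj S0) = r" using jj fS0 cS0 by simp
    have "\<exists>b. \<forall>kk\<in>{1..r}. (\<Sum>i\<in>insert jj S0. b i * mom i kk) = mom m kk"
      by (rule solve_cols[OF f c mom_indep[OF f c]])
    then show ?thesis unfolding beta_def by (rule someI_ex)
  qed
  define T1 where "T1 = (\<Sum>S\<in>Sfam r n. \<bar>Q r S (mom m)\<bar> / \<bar>Q r S P0\<bar>)"
  define T2 where "T2 = (\<Sum>jj\<in>{1..n-1}. \<Sum>i\<in>S0. \<bar>beta jj i\<bar> / \<bar>cf i\<bar>)"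
  define M where "M = 1 + 1 / P0 1 + T1 + T2"
  have T1nn: "T1 \<ge> 0" by (simp add: T1_def sum_nonneg)
  have T2nn: "T2 \<ge> 0" by (simp add: T2_def sum_nonneg)
  have M1: "M \<ge> 1" using T1nn T2nn P01 by (simp add: M_def)
  define del where "del = 1 / (2 * M)"
  have delpos: "del > 0" using M1 by (simp add: del_def)
  have key: "del * t \<le> 1 / 2" if "t \<ge> 0" "t \<le> M" for t
  proof -
    have "del * t \<le> del * M" using that delpos by (simp add: mult_left_mono)
    also have "del * M = 1 / 2" using M1 by (simp add: del_def)
    finally show ?thesis .
  qed
  have invp: "1 / P0 1 > 0" using P01 by simp
  have del1: "del < P0 1"
  proof -
    have "1 / P0 1 \<le> M" using T1nn T2nn by (simp add: M_def)
    then have "del * (1 / P0 1) \<le> 1 / 2" using invp by (intro key) auto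
    then have "del / P0 1 \<le> 1 / 2" by simp
    then have "del \<le> 1 / 2 * P0 1" using P01 by (simp add: pos_divide_le_eq)
    then show ?thesis using P01 by linarith
  qed
  have delS: "\<bar>del * Q r S (mom m)\<bar> < \<bar>Q r S P0\<bar>" if S: "S \<in> Sfam r n" "S \<noteq> S0" for S
  proof -
    have "\<bar>Q r S (mom m)\<bar> / \<bar>Q r S P0\<bar> \<le> T1"
      unfolding T1_def by (rule member_le_sum) (use S Sfam_finite in auto)
    then have "\<bar>Q r S (mom m)\<bar> / \<bar>Q r S P0\<bar> \<le> M" using T2nn invp unfolding M_def by linarith
    then have "del * (\<bar>Q r S (mom m)\<bar> / \<bar>Q r S P0\<bar>) \<le> 1 / 2" by (intro key) auto
    then have "(del * \<bar>Q r S (mom m)\<bar>) / \<bar>Q r S P0\<bar> \<le> 1 / 2" by simp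
    moreover have "\<bar>Q r S P0\<bar> > 0" using QP0nz[OF S] by simp
    ultimately have "del * \<bar>Q r S (mom m)\<bar> \<le> 1 / 2 * \<bar>Q r S P0\<bar>" by (simp add: pos_divide_le_eq)
    then show ?thesis using delpos \<open>\<bar>Q r S P0\<bar> > 0\<close> by (simp add: abs_mult)
  qed
  have delb: "\<bar>del * beta jj i\<bar> < \<bar>cf i\<bar>" if jj: "jj \<in> {1..n-1} - S0" and i: "i \<in> S0" for jj i
  proof -
    have "\<bar>beta jj i\<bar> / \<bar>cf i\<bar> \<le> (\<Sum>i\<in>S0. \<bar>beta jj i\<bar> / \<bar>cf i\<bar>)"
      by (rule member_le_sum) (use i fS0 in auto)
    also have "\<dots> \<le> T2"
      unfolding T2_def by (rule member_le_sum) (use jj in \<open>auto intro: sum_nonneg\<close>)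
    finally have "\<bar>beta jj i\<bar> / \<bar>cf i\<bar> \<le> M" using T1nn invp unfolding M_def by linarith
    then have "del * (\<bar>beta jj i\<bar> / \<bar>cf i\<bar>) \<le> 1 / 2" by (intro key) auto
    then have "(del * \<bar>beta jj i\<bar>) / \<bar>cf i\<bar> \<le> 1 / 2" by simp
    moreover have "\<bar>cf i\<bar> > 0" using cfnz by simp
    ultimately have "del * \<bar>beta jj i\<bar> \<le> 1 / 2 * \<bar>cf i\<bar>" by (simp add: pos_divide_le_eq)
    then show ?thesis using delpos \<open>\<bar>cf i\<bar> > 0\<close> by (simp add: abs_mult)
  qed
  define x0 where "x0 = (\<lambda>kk. P0 kk + (- del) * mom m kk)"
  define x1 where "x1 = (\<lambda>kk. P0 kk + del * mom m kk)"
  have Qx0: "Q r S x0 = Q r S P0 + (- del) * Q r S (mom m)" for S unfolding x0_def by (rule Q_add1)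
  have Qx1: "Q r S x1 = Q r S P0 + del * Q r S (mom m)" for S unfolding x1_def by (rule Q_add1)
  have qm: "Q r S0 (mom m) \<ge> 1"
    using exp_qsign[OF r3 pge, of m] mS0 mN pm S0eq by auto
  have qmpos: "Q r S0 (mom m) > 0" using qm by linarith
  have Qx0S0: "Q r S0 x0 < 0" using qmpos delpos QP0S0 Qx0[of S0] by (simp add: mult_pos_pos)
  have Qx1S0: "Q r S0 x1 > 0" using qmpos delpos QP0S0 Qx1[of S0] by (simp add: mult_pos_pos)
  have other: "sgn (Q r S x0) = sgn (Q r S P0) \<and> Q r S x0 \<noteq> 0 \<and> sgn (Q r S x1) = sgn (Q r S P0) \<and> Q r S x1 \<noteq> 0"
    if "S \<in> Sfam r n" "S \<noteq> S0" for S
  proof -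
    have a: "\<bar>(- del) * Q r S (mom m)\<bar> < \<bar>Q r S P0\<bar>" using delS[OF that] by simp
    have b: "\<bar>del * Q r S (mom m)\<bar> < \<bar>Q r S P0\<bar>" using delS[OF that] by simp
    show ?thesis unfolding Qx0 Qx1 using sgn_pert[OF a] sgn_pert[OF b] by simp
  qed
  have gen0: "generic r n x0" unfolding generic_def using other Qx0S0 by fastforce
  have gen1: "generic r n x1" unfolding generic_def using other Qx1S0 by fastforce
  have same: "\<forall>S\<in>Sfam r n. S \<noteq> S0 \<longrightarrow> sgn (Q r S x0) = sgn (Q r S x1)" using other by simp
  have flip: "sgn (Q r S0 x0) = - sgn (Q r S0 x1)" using Qx0S0 Qx1S0 by simp
  have pos0: "x0 1 > 0" using del1 by (simp add: x0_def momS)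
  have pos1: "x1 1 > 0" using del1 delpos P01 by (simp add: x1_def momS)
  define Y where "Y = (\<lambda>i. if i \<in> {1..n} then (if i \<in> S0 then (if i \<le> j then -1 else 1)
       else if i = n then 1 else (if i < p then -1 else (1::real))) else 0)"
  have Ypm: "Y \<in> pm_vecs n" unfolding pm_vecs_def Y_def by auto
  have qsign: "sgn (Q r S0 (mom i)) = Y i \<and> \<bar>Q r S0 (mom i)\<bar> \<ge> 1" if i: "i \<in> {1..n-1} - S0" for i
  proof -
    have i1: "1 \<le> i" and iS: "i \<notin> insert p {1..r-2}" using i S0eq by auto
    have ip: "i \<noteq> p" using iS by auto
    have iN: "i \<in> {1..n}" "i \<noteq> n" using i by auto
    note qs = exp_qsign[OF r3 pge iS i1, folded S0eq]
    show ?thesis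
    proof (cases "i < p")
      case True
      then show ?thesis using qs iN i by (simp add: Y_def)
    next
      case False
      then have "p < i" using ip by simp
      then show ?thesis using qs iN i False by (simp add: Y_def)
    qed
  qed
  have Ytope: "Y \<in> signvecs r n (cfg n x1)"
  proof -
    define th where "th = real j + 1 / 2"
    define w where "w = (\<lambda>kk::nat. if kk = 1 then - th else if kk = 2 then 1 else (0::real))"
    have r2: "r \<ge> 2" using r3 by simp
    have ipw: "ip r y w = y 1 * (- th) + y 2" for y using ip2[OF r2, of y "- th" 1] by (simp add: w_def)
    define A where "A = \<bar>ip r x1 w\<bar>"
    define eps where "eps = min (1 / (2 * real n)) (del / (2 * (1 + A)))"
    have A0: "A \<ge> 0" by (simp add: A_def)
    have epos: "eps > 0" using nr delpos A0 by (simp add: eps_def)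
    have en: "eps * real n \<le> 1 / 2"
    proof -
      have "eps \<le> 1 / (2 * real n)" by (simp add: eps_def)
      then have "eps * real n \<le> 1 / (2 * real n) * real n" by (intro mult_right_mono) auto
      then show ?thesis using nr by simp
    qed
    have eA: "eps * (1 + A) \<le> del / 2"
    proof -
      have "eps \<le> del / (2 * (1 + A))" by (simp add: eps_def)
      then have "eps * (1 + A) \<le> del / (2 * (1 + A)) * (1 + A)" using A0 by (intro mult_right_mono) auto
      also have "del / (2 * (1 + A)) * (1 + A) = del / 2" using A0 by (simp add: field_simps)
      finally show ?thesis .
    qed
    define u where "u = (\<lambda>kk. coefv (qp S0) kk + eps * w kk)"
    have ipu: "ip r y u = Q r S0 y + eps * ip r y w" for y
      unfolding u_def Q_def using ip_add2[of r y 1 "coefv (qp S0)" eps w] by simp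
    have val_mom: "ip r (mom i) u = Q r S0 (mom i) + eps * (real i - th)" for i
      unfolding ipu ipw by (simp add: momS)
    have sgn_i: "sgn (ip r (cfg n x1 i) u) = Y i" if i: "i \<in> {1..n}" for i
    proof (cases "i = n")
      case True
      have "ip r x1 u = del * Q r S0 (mom m) + eps * ip r x1 w"
        unfolding ipu Qx1 QP0S0 by simp
      moreover have "\<bar>eps * ip r x1 w\<bar> < del * Q r S0 (mom m)"
      proof -
        have "\<bar>eps * ip r x1 w\<bar> = eps * A" using epos by (simp add: A_def abs_mult)
        also have "\<dots> \<le> eps * (1 + A)" using epos by simp
        also have "\<dots> \<le> del / 2" by (rule eA)
        also have "\<dots> < del" using delpos by simp
        also have "\<dots> \<le> del * Q r S0 (mom m)" using qm delpos by simp
        finally show ?thesis .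
      qed
      ultimately have "ip r x1 u > 0" by linarith
      then show ?thesis using True nS0 nr by (simp add: cfg_def Y_def)
    next
      case False
      then have iN1: "i \<in> {1..n-1}" using i by auto
      have cfgi: "cfg n x1 i = mom i" using False by (simp add: cfg_def)
      show ?thesis
      proof (cases "i \<in> S0")
        case True
        have "ip r (mom i) u = eps * (real i - th)"
          using val_mom[of i] Q_mom_zero[OF fS0 cS0r True] by simp
        moreover have "sgn (real i - th) = (if i \<le> j then -1 else 1)"
          by (simp add: th_def sgn_if)
        ultimately show ?thesis using i True epos cfgi by (simp add: Y_def sgn_mult)
      next
        case F2: False
        have qq: "sgn (Q r S0 (mom i)) = Y i" "\<bar>Q r S0 (mom i)\<bar> \<ge> 1" using qsign[of i] iN1 F2 by auto
        have f1: "real i \<le> real n" "real i \<ge> 0" using iN1 by auto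
        have f2: "real j + 1 / 2 \<le> real n" using jr r3 nr by linarith
        have "\<bar>real i - th\<bar> \<le> real n"
          using f1 f2 unfolding th_def by (simp add: abs_le_iff)
        then have "\<bar>eps * (real i - th)\<bar> \<le> eps * real n" using epos by (simp add: abs_mult)
        then have "\<bar>eps * (real i - th)\<bar> < \<bar>Q r S0 (mom i)\<bar>" using en qq(2) by linarith
        then have "sgn (ip r (mom i) u) = sgn (Q r S0 (mom i))"
          unfolding val_mom by (rule sgn_pert)
        then show ?thesis using qq cfgi by simp
      qed
    qed
    have nzu: "nonzero_vec r u"
    proof (rule ccontr)
      assume "\<not> nonzero_vec r u"
      then have "\<forall>kk\<in>{1..r}. u kk = 0" by (simp add: nonzero_vec_def)
      then have "ip r (cfg n x1 n) u = 0" by (simp add: ip_def)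
      moreover have "n \<in> {1..n}" using nr by simp
      ultimately show False using sgn_i[of n] nS0 by (simp add: Y_def)
    qed
    have "Y = (\<lambda>i. if i \<in> {1..n} then sgn (ip r (cfg n x1 i) u) else 0)"
      by (rule ext) (simp add: sgn_i, simp add: Y_def)
    then show ?thesis unfolding signvecs_def using nzu by blast
  qed
  have Ydeps: "\<forall>jj\<in>{1..n-1} - S0. \<exists>mu. dep r (cfg n x0) (insert jj (insert n S0)) mu \<and>
         (\<forall>i\<in>insert jj (insert n S0). sgn (mu i) = Y i)"
  proof
    fix jj assume jj: "jj \<in> {1..n-1} - S0"
    have jjn: "jj \<noteq> n" and jjS0: "jj \<notin> S0" using jj by auto
    have nS0: "n \<notin> S0" using S0sub nr by force
    define b where "b = (if jj = m then (\<lambda>i. if i = m then 1 else 0) else beta jj)"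
    have brep: "\<forall>kk\<in>{1..r}. (\<Sum>i\<in>insert jj S0. b i * mom i kk) = mom m kk"
    proof (cases "jj = m")
      case True
      have "(\<Sum>i\<in>insert jj S0. b i * mom i kk) = mom m kk" for kk
      proof -
        have "(\<Sum>i\<in>insert jj S0. b i * mom i kk) = b m * mom m kk + (\<Sum>i\<in>S0. b i * mom i kk)"
          using True mS0 fS0 by (simp add: sum.insert)
        also have "(\<Sum>i\<in>S0. b i * mom i kk) = 0"
          using True mS0 by (intro sum.neutral) (auto simp: b_def)
        finally show ?thesis using True by (simp add: b_def)
      qed
      then show ?thesis by simp
    next
      case False then show ?thesis using betap[OF jj] by (simp add: b_def)
    qed
    have bS0: "\<bar>del * b i\<bar> < \<bar>cf i\<bar>" if "i \<in> S0" for i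
    proof (cases "jj = m")
      case True then show ?thesis using that mS0 cfnz by (auto simp: b_def)
    next
      case False then show ?thesis using delb[OF jj that] by (simp add: b_def)
    qed
    have fT': "finite (insert jj S0)" and cT': "card (insert jj S0) = r" using fS0 cS0 jjS0 by auto
    have bjj: "sgn (b jj) = Y jj"
    proof -
      have rep: "\<forall>kk\<in>{1..r}. mom m kk = (\<Sum>l\<in>insert jj S0. b l * mom l kk)" using brep by simp
      have "Q r (insert jj S0 - {jj}) (mom m) = b jj * Q r (insert jj S0 - {jj}) (mom jj)"
        by (rule Q_rep_single[OF fT' cT' _ rep]) simp
      then have e: "Q r S0 (mom m) = b jj * Q r S0 (mom jj)" using jjS0 by simp
      have "sgn (Q r S0 (mom m)) = 1" using qm by simp
      then have "sgn (b jj) * sgn (Q r S0 (mom jj)) = 1" using e by (simp add: sgn_mult)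
      moreover have "sgn (Q r S0 (mom jj)) = Y jj" using qsign[OF jj] by simp
      moreover have "Y jj = 1 \<or> Y jj = -1" using Ypm jj unfolding pm_vecs_def by auto
      ultimately show ?thesis by auto
    qed
    define mu where "mu = (\<lambda>i. if i = n then 1 else if i = jj then del * b jj else - (cf i - del * b i))"
    have dd: "dep r (cfg n x0) (insert jj (insert n S0)) mu"
      unfolding dep_def
    proof
      fix kk assume kk: "kk \<in> {1..r}"
      have "(\<Sum>i\<in>insert jj (insert n S0). mu i * cfg n x0 i kk)
          = mu jj * mom jj kk + (mu n * x0 kk + (\<Sum>i\<in>S0. mu i * mom i kk))"
        using jjn jjS0 nS0 fS0 by (simp add: cfg_def) (intro sum.cong, auto)
      also have "(\<Sum>i\<in>S0. mu i * mom i kk) = (\<Sum>i\<in>S0. - (cf i * mom i kk) + del * (b i * mom i kk))"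
        using jjS0 nS0 by (intro sum.cong) (auto simp: mu_def algebra_simps)
      also have "\<dots> = - P0 kk + del * (\<Sum>i\<in>S0. b i * mom i kk)"
        by (simp add: sum.distrib sum_negf sum_distrib_left P0_def sum_subtractf)
      also have "(\<Sum>i\<in>S0. b i * mom i kk) = mom m kk - b jj * mom jj kk"
      proof -
        have "b jj * mom jj kk + (\<Sum>i\<in>S0. b i * mom i kk) = mom m kk"
          using brep kk jjS0 fS0 by (simp add: sum.insert)
        then show ?thesis by linarith
      qed
      finally show "(\<Sum>i\<in>insert jj (insert n S0). mu i * cfg n x0 i kk) = 0"
        using jjn by (simp add: mu_def x0_def algebra_simps)
    qed
    have ss: "\<forall>i\<in>insert jj (insert n S0). sgn (mu i) = Y i"
    proof
      fix i assume i: "i \<in> insert jj (insert n S0)"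
      show "sgn (mu i) = Y i"
      proof (cases "i = n")
        case True then show ?thesis using nr nS0 by (simp add: mu_def Y_def)
      next
        case F1: False
        show ?thesis
        proof (cases "i = jj")
          case True then show ?thesis using F1 bjj delpos by (simp add: mu_def sgn_mult)
        next
          case F2: False
          then have iS0: "i \<in> S0" using i F1 by simp
          have "sgn (cf i - del * b i) = sgn (cf i)"
            using sgn_pert[of "- (del * b i)" "cf i"] bS0[OF iS0] by simp
          moreover have "mu i = - (cf i - del * b i)" using F1 F2 by (simp add: mu_def)
          ultimately have "sgn (mu i) = - sg i" using sgncf by (simp only: sgn_minus)
          moreover have "i \<in> {1..n}" using iS0 S0N by auto
          ultimately show ?thesis using iS0 by (simp add: Y_def sg_def)
        qed
      qed
    qed
    show "\<exists>mu. dep r (cfg n x0) (insert jj (insert n S0)) mu \<and> (\<forall>i\<in>insert jj (insert n S0). sgn (mu i) = Y i)"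
      using dd ss by blast
  qed
  have nS0: "n \<notin> S0" using S0sub nr by force
  have c1: "insert n S0 \<inter> {i\<in>{1..n}. Y i = -1} = {1..j}"
  proof
    show "insert n S0 \<inter> {i\<in>{1..n}. Y i = -1} \<subseteq> {1..j}"
    proof
      fix i assume i: "i \<in> insert n S0 \<inter> {i\<in>{1..n}. Y i = -1}"
      then have "i \<noteq> n" using nS0 by (auto simp: Y_def)
      then have "i \<in> S0" using i by auto
      then show "i \<in> {1..j}" using i by (auto simp: Y_def split: if_splits)
    qed
  next
    show "{1..j} \<subseteq> insert n S0 \<inter> {i\<in>{1..n}. Y i = -1}"
    proof
      fix i assume i: "i \<in> {1..j}"
      then have "i \<in> S0" using jS0 by auto
      moreover have "i \<le> n" using i jr nr by auto
      ultimately show "i \<in> insert n S0 \<inter> {i\<in>{1..n}. Y i = -1}" using i by (auto simp: Y_def)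
    qed
  qed
  have c2: "{i\<in>{1..n}. Y i = -1} - insert n S0 = {r-1..<p}"
  proof
    show "{i\<in>{1..n}. Y i = -1} - insert n S0 \<subseteq> {r-1..<p}"
    proof
      fix i assume i: "i \<in> {i\<in>{1..n}. Y i = -1} - insert n S0"
      then have iS: "i \<notin> S0" "i \<noteq> n" "i \<in> {1..n}" by auto
      then have "i < p" using i by (auto simp: Y_def split: if_splits)
      moreover have "i \<ge> r - 1" using iS S0eq by auto
      ultimately show "i \<in> {r-1..<p}" by simp
    qed
  next
    show "{r-1..<p} \<subseteq> {i\<in>{1..n}. Y i = -1} - insert n S0"
    proof
      fix i assume i: "i \<in> {r-1..<p}"
      then have "i \<notin> S0" using S0eq r3 by auto
      moreover have "i \<in> {1..n}" "i \<noteq> n" using i ple r3 by auto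
      ultimately show "i \<in> {i\<in>{1..n}. Y i = -1} - insert n S0" using i by (auto simp: Y_def)
    qed
  qed
  have "card {r-1..<p} = k" using r3 by (simp add: p_def)
  then have cards: "card (insert n S0 \<inter> {i\<in>{1..n}. Y i = -1}) = j" "card ({i\<in>{1..n}. Y i = -1} - insert n S0) = k"
    using c1 c2 by auto
  show ?thesis
    using S0F gen0 gen1 pos0 pos1 same flip Ypm Ytope Ydeps cards by blast
qed



lemma affine_sgn:
  fixes a b t :: real
  assumes a: "a \<noteq> 0" and ab: "sgn a = - sgn b"
  shows "t < a / (a - b) \<Longrightarrow> sgn ((1 - t) * a + t * b) = sgn a"
    and "a / (a - b) < t \<Longrightarrow> sgn ((1 - t) * a + t * b) = sgn b"
proof -
  have e: "(1 - t) * a + t * b = a - t * (a - b)" by (simp add: algebra_simps)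
  {
    assume t: "t < a / (a - b)"
    show "sgn ((1 - t) * a + t * b) = sgn a"
    proof (cases "a > 0")
      case True
      then have "b < 0" using ab by (auto simp: sgn_if split: if_splits)
      then have d: "a - b > 0" using True by simp
      then have "t * (a - b) < a" using t by (simp add: less_divide_eq)
      then show ?thesis unfolding e using True by simp
    next
      case False
      then have an: "a < 0" using a by simp
      then have "b > 0" using ab by (auto simp: sgn_if split: if_splits)
      then have d: "a - b < 0" using an by simp
      then have "t * (a - b) > a" using t by (simp add: less_divide_eq)
      then show ?thesis unfolding e using an by simp
    qed
  }
  {
    assume t: "a / (a - b) < t"
    show "sgn ((1 - t) * a + t * b) = sgn b"
    proof (cases "a > 0")
      case True
      then have bn: "b < 0" using ab by (auto simp: sgn_if split: if_splits)
      then have d: "a - b > 0" using True by simp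
      then have "t * (a - b) > a" using t by (simp add: divide_less_eq)
      then show ?thesis unfolding e using bn by simp
    next
      case False
      then have an: "a < 0" using a by simp
      then have bp: "b > 0" using ab by (auto simp: sgn_if split: if_splits)
      then have d: "a - b < 0" using an by simp
      then have "t * (a - b) < a" using t by (simp add: divide_less_eq)
      then show ?thesis unfolding e using bp by simp
    qed
  }
qed

lemma affine_sgn_same:
  fixes a b t :: real
  assumes "a \<noteq> 0" "sgn a = sgn b" "t \<in> {0..1}"
  shows "sgn ((1 - t) * a + t * b) = sgn a"
proof (cases "a > 0")
  case True
  then have "b > 0" using assms by (auto simp: sgn_if split: if_splits)
  then have "(1 - t) * a + t * b > 0" using True assms(3)
    by (cases "t = 0") (auto intro: add_nonneg_pos add_pos_nonneg)
  then show ?thesis using True by simp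
next
  case False
  then have an: "a < 0" using assms by simp
  then have "b < 0" using assms by (auto simp: sgn_if split: if_splits)
  then have "(1 - t) * a + t * b < 0" using an assms(3)
    by (cases "t = 0") (auto intro: add_nonpos_neg add_neg_nonpos simp: mult_nonneg_nonpos mult_pos_neg)
  then show ?thesis using an by simp
qed

definition sameside :: "nat \<Rightarrow> nat \<Rightarrow> (nat \<Rightarrow> real) \<Rightarrow> (nat \<Rightarrow> real) \<Rightarrow> bool" where
  "sameside r n x y \<longleftrightarrow> (\<forall>S\<in>Sfam r n. sgn (Q r S x) = sgn (Q r S y))"

definition adj :: "nat \<Rightarrow> nat \<Rightarrow> (nat \<Rightarrow> real) \<Rightarrow> (nat \<Rightarrow> real) \<Rightarrow> bool" where
  "adj r n x y \<longleftrightarrow> generic r n x \<and> generic r n y \<and> (\<exists>S0\<in>Sfam r n.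
     (\<forall>S\<in>Sfam r n. S \<noteq> S0 \<longrightarrow> sgn (Q r S x) = sgn (Q r S y)) \<and> sgn (Q r S0 x) = - sgn (Q r S0 y))"

definition Kset :: "nat \<Rightarrow> nat \<Rightarrow> (nat \<Rightarrow> real) \<Rightarrow> (nat \<Rightarrow> real) \<Rightarrow> nat set set" where
  "Kset r n x y = {S\<in>Sfam r n. sgn (Q r S x) \<noteq> sgn (Q r S y)}"

definition tau :: "nat \<Rightarrow> (nat \<Rightarrow> real) \<Rightarrow> (nat \<Rightarrow> real) \<Rightarrow> nat set \<Rightarrow> real" where
  "tau r x y S = Q r S x / (Q r S x - Q r S y)"

lemma opp_sign: "generic r n x \<Longrightarrow> generic r n y \<Longrightarrow> S \<in> Kset r n x y \<Longrightarrow>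
    Q r S x \<noteq> 0 \<and> sgn (Q r S x) = - sgn (Q r S y)"
  unfolding Kset_def generic_def by (auto simp: sgn_if split: if_splits)

lemma connect_ind:
  "\<And>x0. generic r n x0 \<Longrightarrow> generic r n x1 \<Longrightarrow> x0 1 > 0 \<Longrightarrow> x1 1 > 0 \<Longrightarrow>
    inj_on (tau r x0 x1) (Kset r n x0 x1) \<Longrightarrow> card (Kset r n x0 x1) = L \<Longrightarrow>
    \<exists>ys. ys \<noteq> [] \<and> hd ys = x0 \<and> sameside r n (last ys) x1 \<and>
      (\<forall>l. Suc l < length ys \<longrightarrow> adj r n (ys ! l) (ys ! Suc l)) \<and> (\<forall>y\<in>set ys. generic r n y \<and> y 1 > 0)"
proof (induction L)
  case 0
  have fK: "finite (Kset r n x0 x1)" unfolding Kset_def using Sfam_finite by simp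
  then have "Kset r n x0 x1 = {}" using 0 by simp
  then have "sameside r n x0 x1" unfolding sameside_def Kset_def by auto
  then show ?case using 0 by (intro exI[of _ "[x0]"]) auto
next
  case (Suc L)
  let ?K = "Kset r n x0 x1"
  let ?t = "tau r x0 x1"
  have fK: "finite ?K" unfolding Kset_def using Sfam_finite by simp
  have Kne: "?K \<noteq> {}" using Suc.prems(6) by auto
  have trange: "?t S \<in> {0<..<1}" if "S \<in> ?K" for S
    using opp_sign[OF Suc.prems(1,2) that] unfolding tau_def by (intro s0_range) auto
  define t1 where "t1 = Min (?t ` ?K)"
  have "t1 \<in> ?t ` ?K" unfolding t1_def using fK Kne by (intro Min_in) auto
  then obtain S1 where S1: "S1 \<in> ?K" "?t S1 = t1" by blast
  have t1le: "t1 \<le> ?t S" if "S \<in> ?K" for S unfolding t1_def using fK that by simp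
  define t2 where "t2 = Min (insert 1 (?t ` (?K - {S1})))"
  have t2le1: "t2 \<le> 1" unfolding t2_def using fK by simp
  have t2le: "t2 \<le> ?t S" if "S \<in> ?K - {S1}" for S unfolding t2_def using fK that by simp
  have t12: "t1 < t2"
  proof -
    have "t2 \<in> insert 1 (?t ` (?K - {S1}))" unfolding t2_def using fK by (intro Min_in) auto
    moreover have "t1 < 1" using trange[OF S1(1)] S1(2) by simp
    moreover have "t1 < ?t S" if "S \<in> ?K - {S1}" for S
    proof -
      have "?t S \<noteq> ?t S1" using Suc.prems(5) that S1(1) unfolding inj_on_def by blast
      then show ?thesis using t1le[of S] that S1(2) by simp
    qed
    ultimately show ?thesis by auto
  qed
  define sg where "sg = (t1 + t2) / 2"
  have sg: "t1 < sg" "sg < t2" "0 < sg" "sg < 1" using t12 t2le1 trange[OF S1(1)] S1(2) by (auto simp: sg_def)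
  define y1 where "y1 = seg x0 x1 sg"
  have Qy1: "Q r S y1 = (1 - sg) * Q r S x0 + sg * Q r S x1" for S unfolding y1_def by (rule Q_seg)
  have sgn_notK: "sgn (Q r S y1) = sgn (Q r S x0) \<and> Q r S y1 \<noteq> 0" if "S \<in> Sfam r n" "S \<notin> ?K" for S
  proof -
    have a: "Q r S x0 \<noteq> 0" using Suc.prems(1) that by (simp add: generic_def)
    have b: "sgn (Q r S x0) = sgn (Q r S x1)" using that by (simp add: Kset_def)
    have "sgn (Q r S y1) = sgn (Q r S x0)" unfolding Qy1 using affine_sgn_same[OF a b] sg by simp
    then show ?thesis using a by (auto simp: sgn_0_0)
  qed
  have sgn_K: "sgn (Q r S y1) = sgn (Q r S x0) \<and> Q r S y1 \<noteq> 0" if "S \<in> ?K - {S1}" for S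
  proof -
    have o: "Q r S x0 \<noteq> 0" "sgn (Q r S x0) = - sgn (Q r S x1)" using opp_sign[OF Suc.prems(1,2)] that by auto
    have "sg < ?t S" using sg t2le that by force
    then have "sgn (Q r S y1) = sgn (Q r S x0)" unfolding Qy1 using affine_sgn(1)[OF o] by (simp add: tau_def)
    then show ?thesis using o by (auto simp: sgn_0_0)
  qed
  have sgn_S1: "sgn (Q r S1 y1) = sgn (Q r S1 x1) \<and> Q r S1 y1 \<noteq> 0"
  proof -
    have o: "Q r S1 x0 \<noteq> 0" "sgn (Q r S1 x0) = - sgn (Q r S1 x1)" using opp_sign[OF Suc.prems(1,2) S1(1)] by auto
    have "?t S1 < sg" using sg S1 by simp
    then have e: "sgn (Q r S1 y1) = sgn (Q r S1 x1)" unfolding Qy1 using affine_sgn(2)[OF o] by (simp add: tau_def)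
    have "Q r S1 x1 \<noteq> 0" using Suc.prems(2) S1(1) by (simp add: generic_def Kset_def)
    then show ?thesis using e by (auto simp: sgn_0_0)
  qed
  have S1F: "S1 \<in> Sfam r n" using S1(1) by (simp add: Kset_def)
  have geny1: "generic r n y1"
    unfolding generic_def using sgn_notK sgn_K sgn_S1 by blast
  have adj1: "adj r n x0 y1"
    unfolding adj_def
  proof (intro conjI bexI[of _ S1] ballI impI)
    show "generic r n x0" "generic r n y1" by (fact Suc.prems(1)) (fact geny1)
    show "S1 \<in> Sfam r n" by (fact S1F)
    fix S assume S: "S \<in> Sfam r n" "S \<noteq> S1"
    show "sgn (Q r S x0) = sgn (Q r S y1)"
      using sgn_notK[OF S(1)] sgn_K[of S] S by (cases "S \<in> ?K") auto
  next
    show "sgn (Q r S1 x0) = - sgn (Q r S1 y1)"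
      using sgn_S1 opp_sign[OF Suc.prems(1,2) S1(1)] by simp
  qed
  have Kn: "Kset r n y1 x1 = ?K - {S1}"
  proof
    show "Kset r n y1 x1 \<subseteq> ?K - {S1}"
    proof
      fix S assume S: "S \<in> Kset r n y1 x1"
      then have SF: "S \<in> Sfam r n" by (simp add: Kset_def)
      show "S \<in> ?K - {S1}"
      proof (rule ccontr)
        assume "S \<notin> ?K - {S1}"
        then consider "S \<notin> ?K" | "S = S1" by blast
        then show False
        proof cases
          case 1
          then have "sgn (Q r S y1) = sgn (Q r S x1)" using sgn_notK[OF SF] SF by (simp add: Kset_def)
          then show False using S by (simp add: Kset_def)
        next
          case 2 then show False using S sgn_S1 by (simp add: Kset_def)
        qed
      qed
    qed
  next
    show "?K - {S1} \<subseteq> Kset r n y1 x1"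
    proof
      fix S assume S: "S \<in> ?K - {S1}"
      then have "sgn (Q r S y1) = sgn (Q r S x0)" using sgn_K by blast
      then show "S \<in> Kset r n y1 x1" using S by (simp add: Kset_def)
    qed
  qed
  have tau_new: "tau r y1 x1 S = (?t S - sg) / (1 - sg)" if "S \<in> ?K - {S1}" for S
  proof -
    have o: "Q r S x0 \<noteq> 0" "sgn (Q r S x0) = - sgn (Q r S x1)" using opp_sign[OF Suc.prems(1,2)] that by auto
    have ab: "Q r S x0 - Q r S x1 \<noteq> 0" using o by (auto simp: sgn_if split: if_splits)
    have s1: "1 - sg \<noteq> 0" using sg by simp
    show ?thesis unfolding tau_def Qy1 using ab s1 by (simp add: field_simps)
  qed
  have injn: "inj_on (tau r y1 x1) (Kset r n y1 x1)"
    unfolding Kn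
  proof (rule inj_onI)
    fix S S' assume S: "S \<in> ?K - {S1}" and S': "S' \<in> ?K - {S1}" and e: "tau r y1 x1 S = tau r y1 x1 S'"
    have s1: "1 - sg \<noteq> 0" using sg by simp
    have "?t S = ?t S'" using e tau_new[OF S] tau_new[OF S'] s1 by (simp add: divide_cancel_right)
    then show "S = S'" using Suc.prems(5) S S' unfolding inj_on_def by blast
  qed
  have cardn: "card (Kset r n y1 x1) = L" using Kn Suc.prems(6) S1(1) fK by simp
  have posy1: "y1 1 > 0"
  proof -
    have "y1 1 = (1 - sg) * x0 1 + sg * x1 1" by (simp add: y1_def seg_def)
    moreover have "(1 - sg) * x0 1 > 0" using sg Suc.prems(3) by simp
    moreover have "sg * x1 1 > 0" using sg Suc.prems(4) by simp
    ultimately show ?thesis by simp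
  qed
  obtain ys where ys: "ys \<noteq> []" "hd ys = y1" "sameside r n (last ys) x1"
    "\<forall>l. Suc l < length ys \<longrightarrow> adj r n (ys ! l) (ys ! Suc l)" "\<forall>y\<in>set ys. generic r n y \<and> y 1 > 0"
    using Suc.IH[OF geny1 Suc.prems(2) posy1 Suc.prems(4) injn cardn] by blast
  have ch: "\<forall>l. Suc l < length (x0 # ys) \<longrightarrow> adj r n ((x0 # ys) ! l) ((x0 # ys) ! Suc l)"
  proof (intro allI impI)
    fix l assume l: "Suc l < length (x0 # ys)"
    show "adj r n ((x0 # ys) ! l) ((x0 # ys) ! Suc l)"
    proof (cases l)
      case 0
      then show ?thesis using adj1 ys(1,2) by (simp add: hd_conv_nth)
    next
      case (Suc l')
      then show ?thesis using ys(4) l by simp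
    qed
  qed
  show ?case
    using ys ch Suc.prems(1,3) by (intro exI[of _ "x0 # ys"]) auto
qed



lemma linear_root_finite:
  fixes c0 c1 :: real
  assumes "c1 \<noteq> 0"
  shows "{eta. c0 + eta * c1 = 0} = {- c0 / c1}"
  using assms by (auto simp: field_simps)

lemma perturb:
  assumes r1: "r \<ge> 1" and nr: "n \<ge> r + 1"
    and gA: "generic r n xA" and gB: "generic r n xB" and pB: "xB 1 > 0"
  shows "\<exists>xB'. generic r n xB' \<and> xB' 1 > 0 \<and> sameside r n xB' xB \<and> inj_on (tau r xA xB') (Kset r n xA xB')"
proof -
  let ?F = "Sfam r n"
  define a where "a = (\<lambda>S. Q r S xA)"
  define b where "b = (\<lambda>S. Q r S xB)"
  have anz: "a S \<noteq> 0" if "S \<in> ?F" for S using gA that by (simp add: generic_def a_def)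
  have bnz: "b S \<noteq> 0" if "S \<in> ?F" for S using gB that by (simp add: generic_def b_def)
  define z where "z = (\<lambda>ze::real. \<lambda>kk. \<Sum>mm\<in>{1..n-1}. ze ^ mm * mom mm kk)"
  have Qz: "Q r S (z ze) = (\<Sum>mm\<in>{1..n-1}. ze ^ mm * Q r S (mom mm))" for S ze
    by (rule Q_rep) (auto simp: z_def)
  define PP where "PP = {(S, S'). S \<in> ?F \<and> S' \<in> ?F \<and> S \<noteq> S'}"
  have fPP: "finite PP"
  proof -
    have "PP \<subseteq> ?F \<times> ?F" by (auto simp: PP_def)
    then show ?thesis using Sfam_finite finite_subset by blast
  qed
  define cc where "cc = (\<lambda>(S, S') d. if d \<in> {1..n-1} then a S * Q r S' (mom d) - a S' * Q r S (mom d) else 0)"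
  define B where "B = (\<Union>pr\<in>PP. {ze. (\<Sum>d\<le>n-1. cc pr d * ze ^ d) = 0})"
  have Fpoly: "a S * Q r S' (z ze) - a S' * Q r S (z ze) = (\<Sum>d\<le>n-1. cc (S, S') d * ze ^ d)" for S S' ze
  proof -
    have "a S * Q r S' (z ze) - a S' * Q r S (z ze)
        = (\<Sum>mm\<in>{1..n-1}. (a S * Q r S' (mom mm) - a S' * Q r S (mom mm)) * ze ^ mm)"
      unfolding Qz by (simp add: sum_distrib_left sum_subtractf algebra_simps)
    also have "\<dots> = (\<Sum>d\<le>n-1. (if d \<in> {1..n-1} then a S * Q r S' (mom d) - a S' * Q r S (mom d) else 0) * ze ^ d)"
      by (rule sum_as_poly) auto
    finally show ?thesis by (simp add: cc_def)
  qed
  have fB: "finite B"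
    unfolding B_def
  proof (intro finite_UN_I fPP)
    fix pr assume pr: "pr \<in> PP"
    obtain S S' where SS: "pr = (S, S')" "S \<in> ?F" "S' \<in> ?F" "S \<noteq> S'" using pr by (auto simp: PP_def)
    have fS: "finite S" "finite S'" and cS: "card S = card S'" and cr: "card S < r"
      using SS by (auto simp: Sfam_def intro: finite_subset)
    have "\<not> S \<subseteq> S'"
    proof
      assume "S \<subseteq> S'"
      then have "S = S'" using fS cS by (simp add: card_subset_eq)
      then show False using SS by simp
    qed
    then obtain d where d: "d \<in> S" "d \<notin> S'" by blast
    have dF: "d \<in> {1..n-1}" using d SS by (auto simp: Sfam_def)
    have crS': "card S' < r" using cS cr by simp
    have "cc pr d \<noteq> 0"
      using dF d SS anz Q_mom_zero[OF fS(1) cr d(1)] Q_mom_nz[OF fS(2) crS' d(2)] by (simp add: cc_def)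
    moreover have "d \<le> n - 1" using dF by simp
    ultimately show "finite {ze. (\<Sum>d\<le>n-1. cc pr d * ze ^ d) = 0}"
      by (rule polyfun_finite_roots_ne[rotated])
  qed
  obtain l where l: "real l + 1 \<notin> B"
    using pick_avoid[of "\<lambda>l::nat. real l + 1" B] fB unfolding inj_on_def by auto
  define ze where "ze = real l + 1"
  have ze: "ze \<notin> B" "ze > 0" using l by (auto simp: ze_def)
  define g where "g = (\<lambda>S. Q r S (z ze))"
  have gpair: "a S * g S' \<noteq> a S' * g S" if "(S, S') \<in> PP" for S S'
  proof
    assume "a S * g S' = a S' * g S"
    then have "(\<Sum>d\<le>n-1. cc (S, S') d * ze ^ d) = 0" using Fpoly[of S S' ze] by (simp add: g_def)
    then have "ze \<in> B" using that by (auto simp: B_def)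
    then show False using ze by simp
  qed
  have z1: "z ze 1 > 0"
  proof -
    have "z ze 1 = (\<Sum>mm\<in>{1..n-1}. ze ^ mm)" by (simp add: z_def mom_def)
    also have "\<dots> > 0" using ze nr r1 by (intro sum_pos) auto
    finally show ?thesis .
  qed
  define lin where "lin = (\<lambda>(S, S') (eta::real). (a S * b S' - a S' * b S) + eta * (a S * g S' - a S' * g S))"
  define Beta where "Beta = (\<Union>pr\<in>PP. {eta. lin pr eta = 0})"
  have fBeta: "finite Beta"
    unfolding Beta_def
  proof (intro finite_UN_I fPP)
    fix pr assume pr: "pr \<in> PP"
    obtain S S' where SS: "pr = (S, S')" using prod.exhaust by blast
    have "a S * g S' - a S' * g S \<noteq> 0" using gpair pr SS by simp
    then have "{eta. lin pr eta = 0} = {- (a S * b S' - a S' * b S) / (a S * g S' - a S' * g S)}"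
      unfolding SS lin_def by (simp add: linear_root_finite)
    then show "finite {eta. lin pr eta = 0}" by simp
  qed
  define T where "T = (\<Sum>S\<in>?F. \<bar>g S\<bar> / \<bar>b S\<bar>)"
  have T0: "T \<ge> 0" by (simp add: T_def sum_nonneg)
  define e0 where "e0 = 1 / (1 + T)"
  have e0p: "e0 > 0" using T0 by (simp add: e0_def)
  obtain l2 where l2: "e0 / (real l2 + 2) \<notin> Beta"
  proof -
    have "inj (\<lambda>l::nat. e0 / (real l + 2))" using e0p unfolding inj_on_def by (auto simp: field_simps)
    then show ?thesis using pick_avoid fBeta that by blast
  qed
  define eta where "eta = e0 / (real l2 + 2)"
  have etap: "eta > 0" "eta \<le> e0" using e0p by (auto simp: eta_def field_simps)
  have etaB: "eta \<notin> Beta" using l2 by (simp add: eta_def)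
  have small: "\<bar>eta * g S\<bar> < \<bar>b S\<bar>" if S: "S \<in> ?F" for S
  proof -
    have bp: "\<bar>b S\<bar> > 0" using bnz[OF S] by simp
    have "\<bar>g S\<bar> / \<bar>b S\<bar> \<le> T" unfolding T_def by (rule member_le_sum) (use S Sfam_finite in auto)
    then have "\<bar>g S\<bar> \<le> T * \<bar>b S\<bar>" using bp by (simp add: divide_le_eq)
    then have "eta * \<bar>g S\<bar> \<le> e0 * (T * \<bar>b S\<bar>)" using etap e0p by (intro mult_mono) auto
    also have "\<dots> = (T / (1 + T)) * \<bar>b S\<bar>" by (simp add: e0_def)
    also have "\<dots> < \<bar>b S\<bar>" using bp T0 by (simp add: field_simps)
    finally show ?thesis using etap by (simp add: abs_mult)
  qed
  define xB' where "xB' = (\<lambda>kk. xB kk + eta * z ze kk)"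
  have QB': "Q r S xB' = b S + eta * g S" for S unfolding xB'_def b_def g_def by (rule Q_add1)
  have ss: "sgn (Q r S xB') = sgn (b S) \<and> Q r S xB' \<noteq> 0" if "S \<in> ?F" for S
    unfolding QB' using sgn_pert[OF small[OF that]] by simp
  have genB': "generic r n xB'" unfolding generic_def using ss by blast
  have sameB': "sameside r n xB' xB" unfolding sameside_def using ss by (simp add: b_def)
  have "eta * z ze 1 > 0" using etap z1 by simp
  then have posB': "xB' 1 > 0" using pB by (simp add: xB'_def)
  have inj: "inj_on (tau r xA xB') (Kset r n xA xB')"
  proof (rule inj_onI)
    fix S S' assume S: "S \<in> Kset r n xA xB'" and S': "S' \<in> Kset r n xA xB'"
      and e: "tau r xA xB' S = tau r xA xB' S'"
    show "S = S'"
    proof (rule ccontr)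
      assume ne: "S \<noteq> S'"
      have o: "sgn (a S) = - sgn (Q r S xB')" "a S \<noteq> 0"
        using opp_sign[OF gA genB' S] by (auto simp: a_def)
      have o': "sgn (a S') = - sgn (Q r S' xB')" "a S' \<noteq> 0"
        using opp_sign[OF gA genB' S'] by (auto simp: a_def)
      have d: "Q r S xA - Q r S xB' \<noteq> 0" using o by (auto simp: sgn_if a_def split: if_splits)
      have d': "Q r S' xA - Q r S' xB' \<noteq> 0" using o' by (auto simp: sgn_if a_def split: if_splits)
      have "Q r S xA * (Q r S' xA - Q r S' xB') = Q r S' xA * (Q r S xA - Q r S xB')"
        using e d d' unfolding tau_def by (simp add: field_simps)
      then have "a S * (a S' - Q r S' xB') = a S' * (a S - Q r S xB')" by (simp add: a_def)
      then have "lin (S, S') eta = 0" unfolding lin_def QB' by (simp add: algebra_simps)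
      moreover have "(S, S') \<in> PP" using S S' ne by (auto simp: PP_def Kset_def)
      ultimately have "eta \<in> Beta" by (auto simp: Beta_def)
      then show False using etaB by simp
    qed
  qed
  show ?thesis using genB' posB' sameB' inj by blast
qed

lemma connect:
  assumes r1: "r \<ge> 1" and nr: "n \<ge> r + 1"
    and gA: "generic r n xA" and gB: "generic r n xB" and pA: "xA 1 > 0" and pB: "xB 1 > 0"
  shows "\<exists>ys. ys \<noteq> [] \<and> hd ys = xA \<and> sameside r n (last ys) xB \<and>
      (\<forall>l. Suc l < length ys \<longrightarrow> adj r n (ys ! l) (ys ! Suc l)) \<and> (\<forall>y\<in>set ys. generic r n y \<and> y 1 > 0)"
proof -
  obtain xB' where B': "generic r n xB'" "xB' 1 > 0" "sameside r n xB' xB" "inj_on (tau r xA xB') (Kset r n xA xB')"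
    using perturb[OF r1 nr gA gB pB] by blast
  obtain ys where ys: "ys \<noteq> []" "hd ys = xA" "sameside r n (last ys) xB'"
      "\<forall>l. Suc l < length ys \<longrightarrow> adj r n (ys ! l) (ys ! Suc l)" "\<forall>y\<in>set ys. generic r n y \<and> y 1 > 0"
    using connect_ind[OF gA B'(1) pA B'(2) B'(4) refl] by blast
  have "sameside r n (last ys) xB" using ys(3) B'(3) unfolding sameside_def by simp
  then show ?thesis using ys by blast
qed



lemma type_lemma:
  assumes r1: "r \<ge> 1" and nr: "n \<ge> r + 1"
    and S0: "S0 \<in> Sfam r n" and g0: "generic r n x0" and g1: "generic r n x1"
    and same: "\<forall>S\<in>Sfam r n. S \<noteq> S0 \<longrightarrow> sgn (Q r S x0) = sgn (Q r S x1)"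
    and flip: "sgn (Q r S0 x0) = - sgn (Q r S0 x1)"
    and Y: "Y \<in> pm_vecs n" and Yt: "Y \<in> signvecs r n (cfg n x1)"
    and Ydeps: "\<forall>jj\<in>{1..n-1} - S0. \<exists>mu. dep r (cfg n x0) (insert jj (insert n S0)) mu \<and>
         (\<forall>i\<in>insert jj (insert n S0). sgn (mu i) = Y i)"
    and c1: "card (insert n S0 \<inter> {i\<in>{1..n}. Y i = -1}) = j"
    and c2: "card ({i\<in>{1..n}. Y i = -1} - insert n S0) = k"
    and gy: "generic r n y" and sy: "sameside r n y x0"
  shows "mutation_of_type r n (cfg n y) (cfg n x1) j k"
proof -
  have S0sub: "S0 \<subseteq> {1..n-1}" and cS0: "card S0 + 1 = r" using S0 by (auto simp: Sfam_def)
  have fS0: "finite S0" using S0sub finite_subset by blast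
  have nS0: "n \<notin> S0" using S0sub nr by force
  have sameY: "\<forall>S\<in>Sfam r n. S \<noteq> S0 \<longrightarrow> sgn (Q r S y) = sgn (Q r S x1)"
    using same sy by (simp add: sameside_def)
  have flipY: "sgn (Q r S0 y) = - sgn (Q r S0 x1)" using flip sy S0 by (simp add: sameside_def)
  have Ypm: "Y i = 1 \<or> Y i = -1" if "i \<in> {1..n}" for i using Y that by (simp add: pm_vecs_def)
  have YdepsY: "\<forall>jj\<in>{1..n-1} - S0. \<exists>mu. dep r (cfg n y) (insert jj (insert n S0)) mu \<and>
         (\<forall>i\<in>insert jj (insert n S0). sgn (mu i) = Y i)"
  proof
    fix jj assume jj: "jj \<in> {1..n-1} - S0"
    obtain mu where d: "dep r (cfg n x0) (insert jj (insert n S0)) mu"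
      and sm: "\<forall>i\<in>insert jj (insert n S0). sgn (mu i) = Y i" using Ydeps jj by blast
    define T' where "T' = insert jj S0"
    have nT': "n \<notin> T'" using jj nS0 by (auto simp: T'_def)
    have fT': "finite T'" using fS0 by (simp add: T'_def)
    have cT': "card T' = r" using jj fS0 cS0 by (simp add: T'_def)
    have ins: "insert n T' = insert jj (insert n S0)" by (auto simp: T'_def)
    have S0N: "S0 \<subseteq> {1..n}"
    proof
      fix x assume "x \<in> S0"
      then have "x \<in> {1..n-1}" using S0sub by blast
      then show "x \<in> {1..n}" by auto
    qed
    have sub: "insert n T' \<subseteq> {1..n}" using jj S0N nr by (auto simp: T'_def)
    have mnz: "\<forall>i\<in>insert n T'. mu i \<noteq> 0"
    proof
      fix i assume i: "i \<in> insert n T'"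
      have "Y i \<noteq> 0" using Ypm[of i] sub i by auto
      moreover have "sgn (mu i) = Y i" using sm i ins by auto
      ultimately show "mu i \<noteq> 0" by auto
    qed
    have hypP: "\<forall>i\<in>T'. \<forall>s\<in>{0..1}. Q r (T' - {i}) (seg x0 y s) \<noteq> 0"
    proof (intro ballI)
      fix i s assume i: "i \<in> T'" and s: "s \<in> {0..(1::real)}"
      have "T' - {i} \<subseteq> {1..n-1}" using jj S0sub by (auto simp: T'_def)
      moreover have "card (T' - {i}) + 1 = r" using cT' i fT' r1 by (simp add: card_Diff_singleton)
      ultimately have F: "T' - {i} \<in> Sfam r n" by (simp add: Sfam_def)
      have "Q r (T' - {i}) x0 \<noteq> 0" using g0 F by (simp add: generic_def)
      moreover have "sgn (Q r (T' - {i}) x0) = sgn (Q r (T' - {i}) y)" using sy F by (simp add: sameside_def)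
      ultimately show "Q r (T' - {i}) (seg x0 y s) \<noteq> 0" unfolding Q_seg using affine_nz s by blast
    qed
    have hypF: "\<forall>i\<in>T' - T'. sgn (Q r (T' - {i}) x0) = - sgn (Q r (T' - {i}) y) \<and> Q r (T' - {i}) x0 \<noteq> 0"
      by simp
    obtain mu' where d': "dep r (cfg n y) (insert n T') mu'"
      and s': "\<forall>i\<in>insert n T'. sgn (mu' i) = (if i \<in> T' - T' then - sgn (mu i) else sgn (mu i))"
      using transfer_dep[OF nT' fT' cT' _ mnz subset_refl hypP hypF] d ins by auto
    show "\<exists>mu. dep r (cfg n y) (insert jj (insert n S0)) mu \<and> (\<forall>i\<in>insert jj (insert n S0). sgn (mu i) = Y i)"
      using d' s' sm ins by (intro exI[of _ mu']) auto
  qed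
  have path: "mutation_path r n (cfg n y) (cfg n x1) (\<lambda>s. cfg n (seg y x1 s))
           (Q r S0 y / (Q r S0 y - Q r S0 x1)) (insert n S0)"
    by (rule mutation_from_adj[OF r1 nr S0 gy g1 sameY flipY])
  have eq: "(signvecs r n (cfg n x1) - signvecs r n (cfg n y)) \<inter> pm_vecs n = {Y, \<lambda>i. - Y i}"
    by (rule partC[OF r1 nr S0 gy g1 sameY flipY Y Yt YdepsY])
  show ?thesis
    unfolding mutation_of_type_def Let_def
    using path Y eq c1 c2 by blast
qed

lemma ip_e1: "r \<ge> 1 \<Longrightarrow> ip r x (\<lambda>kk. if kk = 1 then 1 else 0) = x 1"
proof -
  assume r: "r \<ge> 1"
  have "ip r x (\<lambda>kk. if kk = 1 then 1 else 0) = (\<Sum>kk\<in>{1}. x kk * (if kk = 1 then 1 else 0))"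
    unfolding ip_def using r by (intro sum.mono_neutral_right) auto
  then show ?thesis by simp
qed

lemma pointed_cfg:
  assumes "r \<ge> 1" "x 1 > 0" shows "pointed r n (cfg n x)"
  unfolding pointed_def
proof (intro exI[of _ "\<lambda>kk. if kk = 1 then 1 else 0"] conjI ballI)
  show "nonzero_vec r (\<lambda>kk. if kk = 1 then 1 else (0::real))"
    using assms(1) by (auto simp: nonzero_vec_def intro: bexI[of _ 1])
  fix i assume "i \<in> {1..n}"
  have "ip r (cfg n x i) (\<lambda>kk. if kk = 1 then 1 else 0) = cfg n x i 1" by (rule ip_e1[OF assms(1)])
  moreover have "cfg n x i 1 > 0" using assms(2) by (simp add: cfg_def mom_def)
  ultimately show "ip r (cfg n x i) (\<lambda>kk. if kk = 1 then 1 else 0) > 0" by simp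
qed

lemma generic_mom: "generic r n (mom n)"
  unfolding generic_def
proof
  fix S assume S: "S \<in> Sfam r n"
  then have "finite S" "card S < r" by (auto simp: Sfam_def intro: finite_subset)
  moreover have "n \<notin> S"
  proof
    assume "n \<in> S"
    then have "n \<in> {1..n-1}" using S by (auto simp: Sfam_def)
    then show False by auto
  qed
  ultimately have "finite S" "card S < r" "n \<notin> S" by auto
  then show "Q r S (mom n) \<noteq> 0" using Q_mom_nz by blast
qed

lemma assemble:
  assumes r3: "r \<ge> 3" and nr: "n \<ge> r + 1"
  shows "finite E \<Longrightarrow> E \<subseteq> {(j, k). 1 \<le> j \<and> j \<le> (r - 1) div 2 \<and> k + r + 1 \<le> n} \<Longrightarrow>
    \<exists>ys. ys \<noteq> [] \<and> (\<forall>y\<in>set ys. generic r n y \<and> y 1 > 0) \<and>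
      successively (\<lambda>x y. differ_by_mutation r n (cfg n x) (cfg n y)) ys \<and>
      (\<forall>(j, k)\<in>E. \<exists>l. Suc l < length ys \<and> mutation_of_type r n (cfg n (ys ! l)) (cfg n (ys ! Suc l)) j k)"
proof (induction E rule: finite_induct)
  case empty
  have "mom n 1 > 0" by (simp add: mom_def)
  then show ?case using generic_mom by (intro exI[of _ "[mom n]"]) auto
next
  case (insert e E)
  obtain ys where ys: "ys \<noteq> []" "\<forall>y\<in>set ys. generic r n y \<and> y 1 > 0"
    "successively (\<lambda>x y. differ_by_mutation r n (cfg n x) (cfg n y)) ys"
    "\<forall>(j, k)\<in>E. \<exists>l. Suc l < length ys \<and> mutation_of_type r n (cfg n (ys ! l)) (cfg n (ys ! Suc l)) j k"
    using insert by auto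
  obtain j k where e: "e = (j, k)" by (cases e)
  have jk: "1 \<le> j" "j \<le> (r - 1) div 2" "k + r + 1 \<le> n" using insert.prems e by auto
  have r1: "r \<ge> 1" using r3 by simp
  obtain x0 x1 S0 Y where X: "S0 \<in> Sfam r n" "generic r n x0" "generic r n x1" "x0 1 > 0" "x1 1 > 0"
     "\<forall>S\<in>Sfam r n. S \<noteq> S0 \<longrightarrow> sgn (Q r S x0) = sgn (Q r S x1)" "sgn (Q r S0 x0) = - sgn (Q r S0 x1)"
     "Y \<in> pm_vecs n" "Y \<in> signvecs r n (cfg n x1)"
     "\<forall>jj\<in>{1..n-1} - S0. \<exists>mu. dep r (cfg n x0) (insert jj (insert n S0)) mu \<and>
         (\<forall>i\<in>insert jj (insert n S0). sgn (mu i) = Y i)"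
     "card (insert n S0 \<inter> {i\<in>{1..n}. Y i = -1}) = j" "card ({i\<in>{1..n}. Y i = -1} - insert n S0) = k"
    using exper[OF r3 nr jk] by blast
  have lastys: "generic r n (last ys)" "last ys 1 > 0" using ys(1,2) last_in_set by blast+
  obtain zs where zs: "zs \<noteq> []" "hd zs = last ys" "sameside r n (last zs) x0"
      "\<forall>l. Suc l < length zs \<longrightarrow> adj r n (zs ! l) (zs ! Suc l)" "\<forall>y\<in>set zs. generic r n y \<and> y 1 > 0"
    using connect[OF r1 nr lastys(1) X(2) lastys(2) X(4)] by blast
  have zsadj: "successively (adj r n) zs" using zs(4) by (simp add: successively_conv_nth)
  have adj_diff: "differ_by_mutation r n (cfg n x) (cfg n y)" if "adj r n x y" for x y
    using that unfolding adj_def using differ_from_adj[OF r1 nr] by blast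
  have zsdiff: "successively (\<lambda>x y. differ_by_mutation r n (cfg n x) (cfg n y)) zs"
    using zsadj by (rule successively_mono) (use adj_diff in blast)
  define L where "L = ys @ tl zs"
  have Lne: "L \<noteq> []" using ys(1) by (simp add: L_def)
  have lastL: "last L = last zs"
  proof (cases "tl zs = []")
    case True
    then have "zs = [hd zs]" using zs(1) by (metis list.collapse)
    then show ?thesis using True zs(2) by (simp add: L_def)
  next
    case False
    then show ?thesis by (simp add: L_def last_tl)
  qed
  have zsform: "zs = hd zs # tl zs" using zs(1) by simp
  define Pd where "Pd = (\<lambda>x y. differ_by_mutation r n (cfg n x) (cfg n y))"
  have Ldiff: "successively Pd L"
  proof -
    have A: "successively Pd (hd zs # tl zs)" using zs(1) zsdiff by (simp add: Pd_def)
    then have A': "tl zs = [] \<or> Pd (hd zs) (hd (tl zs)) \<and> successively Pd (tl zs)"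
      by (simp add: successively_Cons)
    have B: "successively Pd ys" using ys(3) by (simp add: Pd_def)
    show ?thesis unfolding L_def successively_append_iff using A' B zs(2) by auto
  qed
  have glast: "generic r n (last L)" using lastL zs(1,5) last_in_set by metis
  have sy: "sameside r n (last L) x0" using lastL zs(3) by simp
  have mtyp: "mutation_of_type r n (cfg n (last L)) (cfg n x1) j k"
    by (rule type_lemma[OF r1 nr X(1,2,3,6,7,8,9,10,11,12) glast sy])
  have adjL: "adj r n (last L) x1"
    unfolding adj_def
  proof (intro conjI bexI[of _ S0] ballI impI)
    show "generic r n (last L)" "generic r n x1" "S0 \<in> Sfam r n" using glast X(3) X(1) by auto
    fix S assume "S \<in> Sfam r n" "S \<noteq> S0"
    then show "sgn (Q r S (last L)) = sgn (Q r S x1)" using sy X(6) by (simp add: sameside_def)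
  next
    show "sgn (Q r S0 (last L)) = - sgn (Q r S0 x1)" using sy X(7) X(1) by (simp add: sameside_def)
  qed
  define ys' where "ys' = L @ [x1]"
  have ys'diff: "successively (\<lambda>x y. differ_by_mutation r n (cfg n x) (cfg n y)) ys'"
  proof -
    have "successively Pd ys'"
      unfolding ys'_def successively_append_iff using Ldiff Lne adj_diff[OF adjL] by (simp add: Pd_def)
    then show ?thesis by (simp add: Pd_def)
  qed
  have gen': "\<forall>y\<in>set ys'. generic r n y \<and> y 1 > 0"
  proof
    fix y assume "y \<in> set ys'"
    then have "y \<in> set ys \<or> y \<in> set (tl zs) \<or> y = x1" by (auto simp: ys'_def L_def)
    moreover have "set (tl zs) \<subseteq> set zs" by (simp add: list.set_sel(2) subsetI zs(1))
    ultimately show "generic r n y \<and> y 1 > 0" using ys(2) zs(5) X(3,5) by blast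
  qed
  have newt: "\<exists>l. Suc l < length ys' \<and> mutation_of_type r n (cfg n (ys' ! l)) (cfg n (ys' ! Suc l)) j k"
  proof -
    define l0 where "l0 = length L - 1"
    have a: "Suc l0 < length ys'" using Lne by (simp add: ys'_def l0_def)
    have "ys' ! l0 = last L" using Lne by (simp add: ys'_def nth_append last_conv_nth l0_def)
    moreover have "ys' ! Suc l0 = x1" using Lne by (simp add: ys'_def nth_append l0_def)
    ultimately have "mutation_of_type r n (cfg n (ys' ! l0)) (cfg n (ys' ! Suc l0)) j k" using mtyp by simp
    then show ?thesis using a by blast
  qed
  have oldt: "\<forall>(j, k)\<in>E. \<exists>l. Suc l < length ys' \<and> mutation_of_type r n (cfg n (ys' ! l)) (cfg n (ys' ! Suc l)) j k"
  proof (intro ballI, clarify)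
    fix j' k' assume "(j', k') \<in> E"
    then obtain l where l: "Suc l < length ys" "mutation_of_type r n (cfg n (ys ! l)) (cfg n (ys ! Suc l)) j' k'"
      using ys(4) by blast
    have "ys' ! l = ys ! l" "ys' ! Suc l = ys ! Suc l" using l(1) by (simp_all add: ys'_def L_def nth_append)
    moreover have "Suc l < length ys'" using l(1) by (simp add: ys'_def L_def)
    ultimately show "\<exists>l. Suc l < length ys' \<and> mutation_of_type r n (cfg n (ys' ! l)) (cfg n (ys' ! Suc l)) j' k'"
      using l(2) by (intro exI[of _ l]) simp
  qed
  have ne': "ys' \<noteq> []" by (simp add: ys'_def)
  have allt: "\<forall>(j, k)\<in>insert e E. \<exists>l. Suc l < length ys' \<and> mutation_of_type r n (cfg n (ys' ! l)) (cfg n (ys' ! Suc l)) j k"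
  proof
    fix pr assume pr: "pr \<in> insert e E"
    obtain j' k' where pr': "pr = (j', k')" by (cases pr)
    show "case pr of (j, k) \<Rightarrow> \<exists>l. Suc l < length ys' \<and> mutation_of_type r n (cfg n (ys' ! l)) (cfg n (ys' ! Suc l)) j k"
    proof (cases "pr = e")
      case True then show ?thesis using newt e by simp
    next
      case False then have "pr \<in> E" using pr by simp
      then show ?thesis using oldt pr' by blast
    qed
  qed
  show ?case using ys'diff gen' ne' allt by blast
qed



theorem lemma4p3:
  fixes n r :: nat
  assumes "1 \<le> r" and "r \<le> n"
  shows "\<exists>(Vs :: nat \<Rightarrow> config) (N :: nat).
           (\<forall>t\<le>N. pointed r n (Vs t) \<and> general_position r n (Vs t)) \<and>
           (\<forall>t\<in>{1..N}. differ_by_mutation r n (Vs (t - 1)) (Vs t)) \<and>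
           (\<forall>j k. 1 \<le> j \<and> j \<le> (r - 1) div 2 \<and> int k \<le> (int n - int r - 1) div 2 \<longrightarrow>
              (\<exists>t\<in>{1..N}. mutation_of_type r n (Vs (t - 1)) (Vs t) j k))"
proof (cases "r \<ge> 3 \<and> n \<ge> r + 1")
  case False
  define V where "V = cfg n (mom n)"
  have pV: "pointed r n V" unfolding V_def using assms(1) by (intro pointed_cfg) (simp_all add: mom_def)
  have gV: "general_position r n V" unfolding V_def using assms(1) generic_mom by (rule gp_cfg)
  have none: "\<not> (1 \<le> j \<and> j \<le> (r - 1) div 2 \<and> int k \<le> (int n - int r - 1) div 2)" for j k
  proof
    assume h: "1 \<le> j \<and> j \<le> (r - 1) div 2 \<and> int k \<le> (int n - int r - 1) div 2"
    show False
    proof (cases "r \<ge> 3")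
      case True
      then have "n = r" using False assms(2) by simp
      then have "(int n - int r - 1) div 2 = -1" by simp
      then show False using h by simp
    next
      case F2: False
      then have "(r - 1) div 2 = 0" by presburger
      then show False using h by auto
    qed
  qed
  show ?thesis
    by (rule exI[of _ "\<lambda>_. V"], rule exI[of _ 0]) (use pV gV none in auto)
next
  case True
  then have r3: "r \<ge> 3" and nr: "n \<ge> r + 1" by auto
  have r1: "r \<ge> 1" using r3 by simp
  define E where "E = {(j, k). 1 \<le> j \<and> j \<le> (r - 1) div 2 \<and> k + r + 1 \<le> n}"
  have fE: "finite E"
  proof -
    have "E \<subseteq> {..r} \<times> {..n}" by (auto simp: E_def)
    then show ?thesis using finite_subset by blast
  qed
  obtain ys where ys: "ys \<noteq> []" "\<forall>y\<in>set ys. generic r n y \<and> y 1 > 0"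
      "successively (\<lambda>x y. differ_by_mutation r n (cfg n x) (cfg n y)) ys"
      "\<forall>(j, k)\<in>E. \<exists>l. Suc l < length ys \<and> mutation_of_type r n (cfg n (ys ! l)) (cfg n (ys ! Suc l)) j k"
    using assemble[OF r3 nr fE] by (auto simp: E_def)
  define Vs where "Vs = (\<lambda>t. cfg n (ys ! t))"
  have lpos: "length ys > 0" using ys(1) by simp
  define N where "N = length ys - 1"
  have c1: "\<forall>t\<le>N. pointed r n (Vs t) \<and> general_position r n (Vs t)"
  proof (intro allI impI)
    fix t assume tN: "t \<le> N"
    have "t < length ys" using lpos tN unfolding N_def by arith
    then have "ys ! t \<in> set ys" by simp
    then have "generic r n (ys ! t)" "(ys ! t) 1 > 0" using ys(2) by auto
    then show "pointed r n (Vs t) \<and> general_position r n (Vs t)"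
      unfolding Vs_def using pointed_cfg[OF r1] gp_cfg[OF r1] by blast
  qed
  have c2: "\<forall>t\<in>{1..N}. differ_by_mutation r n (Vs (t - 1)) (Vs t)"
  proof
    fix t assume t: "t \<in> {1..N}"
    have "Suc (t - 1) < length ys" using lpos t unfolding N_def by auto
    from successively_nth[OF ys(3) this] have "differ_by_mutation r n (cfg n (ys ! (t - 1))) (cfg n (ys ! Suc (t - 1)))" .
    then show "differ_by_mutation r n (Vs (t - 1)) (Vs t)" using t by (simp add: Vs_def)
  qed
  have c3: "\<forall>j k. 1 \<le> j \<and> j \<le> (r - 1) div 2 \<and> int k \<le> (int n - int r - 1) div 2 \<longrightarrow>
              (\<exists>t\<in>{1..N}. mutation_of_type r n (Vs (t - 1)) (Vs t) j k)"
  proof (intro allI impI)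
    fix j k assume h: "1 \<le> j \<and> j \<le> (r - 1) div 2 \<and> int k \<le> (int n - int r - 1) div 2"
    have "k + r + 1 \<le> n" using h nr by presburger
    then have "(j, k) \<in> E" using h by (simp add: E_def)
    then obtain l where l: "Suc l < length ys" "mutation_of_type r n (cfg n (ys ! l)) (cfg n (ys ! Suc l)) j k"
      using ys(4) by blast
    have "Suc l \<in> {1..N}" using l(1) by (simp add: N_def)
    moreover have "mutation_of_type r n (Vs (Suc l - 1)) (Vs (Suc l)) j k" using l(2) by (simp add: Vs_def)
    ultimately show "\<exists>t\<in>{1..N}. mutation_of_type r n (Vs (t - 1)) (Vs t) j k" by blast
  qed
  show ?thesis using c1 c2 c3 by blast
qed

end
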